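(* Let $N\ge3$, $\alpha,\beta>-1$, $\mu\in(1,2)$, let $\{x_j,\omega_j\}_{j=0}^N$ be the JGL nodes and weights, and let $\hat h_j\in\mathcal P_{N-1}$ ($0\le j\le N-1$) be the Lagrange basis polynomials at $x_0,\dots,x_{N-1}$, i.e. $\hat h_j(x_i)=\delta_{ij}$ for $0\le i,j\le N-1$. Then for $0\le j\le N-1$, $$ \hat h_j(x)=\sum_{n=0}^{N-1}\varrho_{nj}P_n^{(\alpha,\beta)}(x)=\sum_{l=0}^{N-1}\tilde\varrho_{lj}P_l^{(\mu,1-\mu)}(x)=\hat\varrho_{0j}+\sum_{l=0}^{N-2}\hat\varrho_{l+1,j}(1+x)P_l^{(\mu,1-\mu)}(x), $$ where $\hat\varrho_{00}=1$, $\hat\varrho_{0j}=0$ for $1\le j\le N-1$, and $$ \varrho_{n0}=\frac{1}{\gamma_n^{(\alpha,\beta)}}\Big\{P_n^{(\alpha,\beta)}(-1)\omega_0-\frac{\beta+1}{\alpha+1}\frac{P_N^{(\alpha,\beta)}(1)}{P_N^{(\alpha,\beta)}(-1)}P_n^{(\alpha,\beta)}(1)\omega_N\Big\}, $$ $$ \varrho_{nj}=\frac{1}{\gamma_n^{(\alpha,\beta)}}\Big\{P_n^{(\alpha,\beta)}(x_j)\omega_j-\frac{1}{\alpha+1}\frac{P_N^{(\alpha,\beta)}(1)}{P_N^{(\alpha,\beta)}(x_j)}P_n^{(\alpha,\beta)}(1)\omega_N\Big\},\quad 1\le j\le N-1, $$ $$ \tilde\varrho_{lj}=\sum_{n=l}^{N-1}{}^{(\alpha,\beta)}C^{(\mu,1-\mu)}_{ln}\,\varrho_{nj},\quad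 0\le l,j\le N-1, $$ and the $\hat\varrho_{ij}$, $1\le i\le N-1$, are given by the backward recurrence $$ \hat\varrho_{N-1,j}=\frac{\tilde\varrho_{N-1,j}}{a_{N-1}},\quad \hat\varrho_{N-2,j}=\frac{\tilde\varrho_{N-2,j}}{a_{N-2}}-\frac{b_{N-2}+1}{a_{N-2}}\hat\varrho_{N-1,j},\quad \hat\varrho_{ij}=\frac{\tilde\varrho_{ij}}{a_i}-\frac{b_i+1}{a_i}\hat\varrho_{i+1,j}-\frac{c_i}{a_i}\hat\varrho_{i+2,j}\ \ (i=N-3,\dots,1), $$ with $a_i=\frac{i+1}{2i+1}$ ($i\ge1$), $b_i=\frac{1-2\mu}{(2i+1)(2i+3)}$ and $c_i=\frac{(i+1+\mu)(i+2-\mu)}{(i+2)(2i+3)}$ ($i\ge0$).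
   Context: Jacobi polynomials are in Szegő's normalization: $P_n^{(\alpha,\beta)}(x)=\frac{\Gamma(n+\alpha+1)}{n!\Gamma(\alpha+1)}\,{}_2F_1\big(-n,n+\alpha+\beta+1;\alpha+1;\tfrac{1-x}{2}\big)$, $P_0^{(\alpha,\beta)}=1$. With these coefficients the three-term recurrence $xP_l^{(\mu,1-\mu)}=a_{l+1}P_{l+1}^{(\mu,1-\mu)}+b_lP_l^{(\mu,1-\mu)}+c_{l-1}P_{l-1}^{(\mu,1-\mu)}$ holds for $l\ge0$ with $c_{-1}=0$. For $\alpha,\beta>-1$, $\gamma_n^{(\alpha,\beta)}=\frac{2^{\alpha+\beta+1}\Gamma(n+\alpha+1)\Gamma(n+\beta+1)}{(2n+\alpha+\beta+1)\,n!\,\Gamma(n+\alpha+\beta+1)}$. Connection coefficients: for $\alpha,\beta,a,b>-1$, ${}^{(\alpha,\beta)}C^{(a,b)}_{ln}$ are the unique numbers with $P_n^{(\alpha,\beta)}=\sum_{l=0}^n {}^{(\alpha,\beta)}C^{(a,b)}_{ln}P_l^{(a,b)}$. JGL nodes $x_0<\dots<x_N$ are the zeros of $(1-x^2)\frac{d}{dx}P_N^{(\alpha,\beta)}$ ($x_0=-1$, $x_N=1$) and the weights $\omega_j$ make $\int_{-1}^1\phi(1-x)^\alpha(1+x)^\beta dx=\sum_j\phi(x_j)\omega_j$ exact for $\phi\in\mathcal P_{2N-1}$. *)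

theory Defs
  imports "HOL-Analysis.Analysis"
begin

text \<open>Jacobi polynomial in Szego's normalization, via the terminating 2F1 series.\<close>
definition jacobiP :: "nat \<Rightarrow> real \<Rightarrow> real \<Rightarrow> real \<Rightarrow> real" where
  "jacobiP n \<alpha> \<beta> x =
     Gamma (real n + \<alpha> + 1) / (fact n * Gamma (\<alpha> + 1)) *
     (\<Sum>k\<le>n. pochhammer (- real n) k * pochhammer (real n + \<alpha> + \<beta> + 1) k
              / (pochhammer (\<alpha> + 1) k * fact k) * ((1 - x) / 2) ^ k)"

text \<open>Normalization constant gamma_n; the n = 0 case is written in the form
  obtained by (alpha+beta+1) Gamma(alpha+beta+1) = Gamma(alpha+beta+2), which is
  the standard value and also covers alpha+beta+1 = 0.\<close>
definition jacobi_gamma :: "nat \<Rightarrow> real \<Rightarrow> real \<Rightarrow> real" where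
  "jacobi_gamma n \<alpha> \<beta> =
     (if n = 0 then 2 powr (\<alpha> + \<beta> + 1) * Gamma (\<alpha> + 1) * Gamma (\<beta> + 1) / Gamma (\<alpha> + \<beta> + 2)
      else 2 powr (\<alpha> + \<beta> + 1) * Gamma (real n + \<alpha> + 1) * Gamma (real n + \<beta> + 1)
           / ((2 * real n + \<alpha> + \<beta> + 1) * fact n * Gamma (real n + \<alpha> + \<beta> + 1)))"

definition conn_coeff :: "real \<Rightarrow> real \<Rightarrow> real \<Rightarrow> real \<Rightarrow> nat \<Rightarrow> nat \<Rightarrow> real" where
  "conn_coeff \<alpha> \<beta> a b l n =
     (THE c :: nat \<Rightarrow> real. (\<forall>k>n. c k = 0) \<and>
        (\<forall>x. jacobiP n \<alpha> \<beta> x = (\<Sum>k\<le>n. c k * jacobiP k a b x))) l"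

definition JGL_nodes :: "nat \<Rightarrow> real \<Rightarrow> real \<Rightarrow> (nat \<Rightarrow> real) \<Rightarrow> bool" where
  "JGL_nodes N \<alpha> \<beta> xs \<longleftrightarrow>
     (\<forall>i j. i < j \<and> j \<le> N \<longrightarrow> xs i < xs j) \<and>
     xs ` {0..N} = {y. (1 - y\<^sup>2) * deriv (jacobiP N \<alpha> \<beta>) y = 0}"

definition JGL_weights :: "nat \<Rightarrow> real \<Rightarrow> real \<Rightarrow> (nat \<Rightarrow> real) \<Rightarrow> (nat \<Rightarrow> real) \<Rightarrow> bool" where
  "JGL_weights N \<alpha> \<beta> xs w \<longleftrightarrow>
     (\<forall>p :: real poly. degree p \<le> 2 * N - 1 \<longrightarrow>
        ((\<lambda>y. poly p y * (1 - y) powr \<alpha> * (1 + y) powr \<beta>) has_integral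
           (\<Sum>j\<le>N. poly p (xs j) * w j)) {-1..1})"

text \<open>Three-term recurrence coefficients for P^(mu,1-mu).\<close>
definition rec_a :: "nat \<Rightarrow> real" where
  "rec_a i = (real i + 1) / (2 * real i + 1)"
definition rec_b :: "real \<Rightarrow> nat \<Rightarrow> real" where
  "rec_b \<mu> i = (1 - 2 * \<mu>) / ((2 * real i + 1) * (2 * real i + 3))"
definition rec_c :: "real \<Rightarrow> nat \<Rightarrow> real" where
  "rec_c \<mu> i = (real i + 1 + \<mu>) * (real i + 2 - \<mu>) / ((real i + 2) * (2 * real i + 3))"

definition rho :: "real \<Rightarrow> real \<Rightarrow> nat \<Rightarrow> (nat \<Rightarrow> real) \<Rightarrow> (nat \<Rightarrow> real) \<Rightarrow> nat \<Rightarrow> nat \<Rightarrow> real" where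
  "rho \<alpha> \<beta> N xs w n j =
     (if j = 0 then
        1 / jacobi_gamma n \<alpha> \<beta> *
        (jacobiP n \<alpha> \<beta> (-1) * w 0
         - (\<beta> + 1) / (\<alpha> + 1) * (jacobiP N \<alpha> \<beta> 1 / jacobiP N \<alpha> \<beta> (-1)) * jacobiP n \<alpha> \<beta> 1 * w N)
      else
        1 / jacobi_gamma n \<alpha> \<beta> *
        (jacobiP n \<alpha> \<beta> (xs j) * w j
         - 1 / (\<alpha> + 1) * (jacobiP N \<alpha> \<beta> 1 / jacobiP N \<alpha> \<beta> (xs j)) * jacobiP n \<alpha> \<beta> 1 * w N))"

definition rho_tilde :: "real \<Rightarrow> real \<Rightarrow> real \<Rightarrow> nat \<Rightarrow> (nat \<Rightarrow> real) \<Rightarrow> (nat \<Rightarrow> real) \<Rightarrow> nat \<Rightarrow> nat \<Rightarrow> real" where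
  "rho_tilde \<alpha> \<beta> \<mu> N xs w l j =
     (\<Sum>n = l..N - 1. conn_coeff \<alpha> \<beta> \<mu> (1 - \<mu>) l n * rho \<alpha> \<beta> N xs w n j)"

end

theory Submission
  imports Defs
begin

definition wt :: "real \<Rightarrow> real \<Rightarrow> real \<Rightarrow> real" where
  "wt \<alpha> \<beta> x = (1 - x) powr \<alpha> * (1 + x) powr \<beta>"

lemma wt_has_integral:
  assumes "\<alpha> > -1" "\<beta> > -1"
  shows "(wt \<alpha> \<beta> has_integral 2 powr (\<alpha> + \<beta> + 1) * Beta (\<alpha> + 1) (\<beta> + 1)) {-1..1}"
proof -
  have B: "((\<lambda>t. t powr (\<beta> + 1 - 1) * (1 - t) powr (\<alpha> + 1 - 1)) has_integral Beta (\<beta>+1) (\<alpha>+1)) (cbox 0 1)"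
    using has_integral_Beta_real[of "\<beta>+1" "\<alpha>+1"] assms by simp
  have A: "((\<lambda>x. (\<lambda>t. t powr (\<beta> + 1 - 1) * (1 - t) powr (\<alpha> + 1 - 1)) ((1/2) *\<^sub>R x + 1/2)) has_integral
     (1 / (\<bar>1/2\<bar> ^ DIM(real))) *\<^sub>R Beta (\<beta>+1) (\<alpha>+1)) ((\<lambda>x. (1 / (1/2)) *\<^sub>R x + -((1 / (1/2)) *\<^sub>R (1/2))) ` cbox 0 1)"
    by (rule has_integral_affinity[OF B]) simp
  have img: "((\<lambda>x. (1 / (1/2)) *\<^sub>R x + -((1 / (1/2)) *\<^sub>R (1/2))) ` cbox 0 (1::real)) = {-1..1}"
  proof -
    have "((\<lambda>x. (1 / (1/2)) *\<^sub>R x + -((1 / (1/2)) *\<^sub>R (1/2))) ` cbox 0 (1::real)) = (\<lambda>x. 2*x - 1) ` {0..1}"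
      by simp
    also have "\<dots> = {-1..1}"
    proof
      show "(\<lambda>x. 2*x - 1) ` {0..1} \<subseteq> {-1..(1::real)}" by auto
      show "{-1..(1::real)} \<subseteq> (\<lambda>x. 2*x - 1) ` {0..1}"
      proof
        fix y :: real assume "y \<in> {-1..1}"
        then show "y \<in> (\<lambda>x. 2*x - 1) ` {0..1}" by (intro image_eqI[of _ _ "(y+1)/2"]) (auto simp: field_simps)
      qed
    qed
    finally show ?thesis .
  qed
  have A2: "((\<lambda>x. ((1+x)/2) powr \<beta> * ((1-x)/2) powr \<alpha>) has_integral 2 * Beta (\<beta>+1) (\<alpha>+1)) {-1..1}"
  proof -
    have "((\<lambda>x. (\<lambda>t. t powr (\<beta> + 1 - 1) * (1 - t) powr (\<alpha> + 1 - 1)) ((1/2) *\<^sub>R x + 1/2)) has_integral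
       2 * Beta (\<beta>+1) (\<alpha>+1)) {-1..1}" using A img by simp
    moreover have "(\<lambda>x::real. (\<lambda>t. t powr (\<beta> + 1 - 1) * (1 - t) powr (\<alpha> + 1 - 1)) ((1/2) *\<^sub>R x + 1/2))
       = (\<lambda>x. ((1+x)/2) powr \<beta> * ((1-x)/2) powr \<alpha>)"
      by (rule ext) (simp add: field_simps)
    ultimately show ?thesis by simp
  qed
  have eq: "wt \<alpha> \<beta> x = 2 powr (\<alpha> + \<beta>) * (((1+x)/2) powr \<beta> * ((1-x)/2) powr \<alpha>)" if "x \<in> {-1..1}" for x
  proof -
    have "((1+x)/2) powr \<beta> = (1+x) powr \<beta> / 2 powr \<beta>" using that by (simp add: powr_divide)
    moreover have "((1-x)/2) powr \<alpha> = (1-x) powr \<alpha> / 2 powr \<alpha>" using that by (simp add: powr_divide)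
    ultimately show ?thesis by (simp add: wt_def powr_add field_simps)
  qed
  have "((\<lambda>x. 2 powr (\<alpha> + \<beta>) * (((1+x)/2) powr \<beta> * ((1-x)/2) powr \<alpha>)) has_integral
        2 powr (\<alpha> + \<beta>) * (2 * Beta (\<beta>+1) (\<alpha>+1))) {-1..1}"
    by (rule has_integral_mult_right[OF A2])
  then have "(wt \<alpha> \<beta> has_integral 2 powr (\<alpha> + \<beta>) * (2 * Beta (\<beta>+1) (\<alpha>+1))) {-1..1}"
    by (rule has_integral_eq[rotated]) (use eq in auto)
  moreover have "2 powr (\<alpha> + \<beta>) * (2 * Beta (\<beta>+1) (\<alpha>+1)) = 2 powr (\<alpha> + \<beta> + 1) * Beta (\<alpha> + 1) (\<beta> + 1)"
    by (simp add: powr_add Beta_commute)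
  ultimately show ?thesis by simp
qed

lemma wt_shift:
  assumes "x \<in> {-1..1::real}"
  shows "(1 + x) ^ k * wt \<alpha> \<beta> x = wt \<alpha> (\<beta> + real k) x"
proof (cases "x = -1")
  case True
  then show ?thesis by (cases k) (auto simp: wt_def)
next
  case False
  with assms have "1 + x > 0" by auto
  then show ?thesis by (simp add: wt_def powr_add powr_realpow)
qed

lemma wt_poly_integrable:
  assumes "\<alpha> > -1" "\<beta> > -1"
  shows "(\<lambda>x. poly p x * wt \<alpha> \<beta> x) integrable_on {-1..1}"
proof -
  define q where "q = pcompose p [:-1, 1:]"
  have pq: "poly p x = (\<Sum>k\<le>degree q. coeff q k * (1 + x) ^ k)" for x
  proof -
    have "poly p x = poly q (1 + x)" by (simp add: q_def poly_pcompose)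
    also have "\<dots> = (\<Sum>k\<le>degree q. coeff q k * (1 + x) ^ k)" by (simp add: poly_altdef)
    finally show ?thesis .
  qed
  have "(\<lambda>x. \<Sum>k\<le>degree q. coeff q k * ((1 + x) ^ k * wt \<alpha> \<beta> x)) integrable_on {-1..1}"
  proof (intro integrable_sum integrable_on_mult_right)
    fix k assume "k \<in> {..degree q}"
    have "wt \<alpha> (\<beta> + real k) integrable_on {-1..1}"
      using wt_has_integral[of \<alpha> "\<beta> + real k"] assms by (auto simp: has_integral_integrable)
    then show "(\<lambda>x. (1 + x) ^ k * wt \<alpha> \<beta> x) integrable_on {-1..1}"
      by (rule integrable_eq) (metis wt_shift)
  qed simp
  then show ?thesis
    by (rule integrable_eq) (simp add: pq sum_distrib_left sum_distrib_right mult_ac)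
qed

lemma ibp_zero:
  assumes "\<alpha> > -1" "\<beta> > -1"
  shows "((\<lambda>x. poly ([:\<beta> - \<alpha>, -(\<alpha> + \<beta> + 2):] * F + [:1, 0, -1:] * pderiv F) x * wt \<alpha> \<beta> x)
          has_integral 0) {-1..1}"
proof -
  define G where "G x = (1 - x) powr (\<alpha> + 1) * (1 + x) powr (\<beta> + 1) * poly F x" for x
  have cont: "continuous_on {-1..1} G"
    unfolding G_def using assms
    by (intro continuous_intros continuous_on_powr') auto
  have der: "(G has_vector_derivative (poly ([:\<beta> - \<alpha>, -(\<alpha> + \<beta> + 2):] * F + [:1, 0, -1:] * pderiv F) x * wt \<alpha> \<beta> x)) (at x)"
    if x: "x \<in> {-1<..<1}" for x
  proof -
    from x have p1: "1 - x > 0" and p2: "1 + x > 0" by auto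
    have d1: "((\<lambda>x. (1 - x) powr (\<alpha> + 1)) has_real_derivative (\<alpha> + 1) * (1 - x) powr \<alpha> * (-1)) (at x)"
      using DERIV_chain2[where f="\<lambda>z. z powr (\<alpha>+1)" and g="\<lambda>x. 1 - x", OF has_real_derivative_powr[OF p1, of "\<alpha>+1"], of "-1"]
      using x by (auto intro!: derivative_eq_intros)
    have d2: "((\<lambda>x. (1 + x) powr (\<beta> + 1)) has_real_derivative (\<beta> + 1) * (1 + x) powr \<beta> * 1) (at x)"
      using DERIV_chain2[where f="\<lambda>z. z powr (\<beta>+1)" and g="\<lambda>x. 1 + x", OF has_real_derivative_powr[OF p2, of "\<beta>+1"], of "1"]
      using x by (auto intro!: derivative_eq_intros)
    have e: "(((\<alpha> + 1) * (1 - x) powr \<alpha> * (-1)) * (1 + x) powr (\<beta> + 1) + ((\<beta> + 1) * (1 + x) powr \<beta> * 1) * (1 - x) powr (\<alpha> + 1)) * poly F x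
        + poly (pderiv F) x * ((1 - x) powr (\<alpha> + 1) * (1 + x) powr (\<beta> + 1))
        = poly ([:\<beta> - \<alpha>, -(\<alpha> + \<beta> + 2):] * F + [:1, 0, -1:] * pderiv F) x * wt \<alpha> \<beta> x"
      using p1 p2 by (simp add: wt_def powr_add algebra_simps)
    have "(G has_real_derivative poly ([:\<beta> - \<alpha>, -(\<alpha> + \<beta> + 2):] * F + [:1, 0, -1:] * pderiv F) x * wt \<alpha> \<beta> x) (at x)"
      unfolding G_def by (rule DERIV_cong[OF DERIV_mult[OF DERIV_mult[OF d1 d2] poly_DERIV[of F x]] e])
    then show ?thesis by (simp add: has_real_derivative_iff_has_vector_derivative)
  qed
  have "((\<lambda>x. poly ([:\<beta> - \<alpha>, -(\<alpha> + \<beta> + 2):] * F + [:1, 0, -1:] * pderiv F) x * wt \<alpha> \<beta> x)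
          has_integral (G 1 - G (-1))) {-1..1}"
    by (rule fundamental_theorem_of_calculus_interior[OF _ cont der]) auto
  moreover have "G 1 = 0" "G (-1) = 0" using assms by (auto simp: G_def)
  ultimately show ?thesis by simp
qed

definition jc :: "nat \<Rightarrow> real \<Rightarrow> real \<Rightarrow> nat \<Rightarrow> real" where
  "jc n \<alpha> \<beta> k = Gamma (real n + \<alpha> + 1) / (fact n * Gamma (\<alpha> + 1)) *
     (pochhammer (- real n) k * pochhammer (real n + \<alpha> + \<beta> + 1) k / (pochhammer (\<alpha> + 1) k * fact k))"

definition Yp :: "nat \<Rightarrow> real \<Rightarrow> real \<Rightarrow> real poly" where
  "Yp n \<alpha> \<beta> = (\<Sum>k\<le>n. monom (jc n \<alpha> \<beta> k) k)"

definition Tp :: "real poly" where "Tp = [:1/2, -1/2:]"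

definition jp :: "nat \<Rightarrow> real \<Rightarrow> real \<Rightarrow> real poly" where
  "jp n \<alpha> \<beta> = pcompose (Yp n \<alpha> \<beta>) Tp"

lemma jc_zero: "k > n \<Longrightarrow> jc n \<alpha> \<beta> k = 0"
  unfolding jc_def by (subst pochhammer_eq_0_iff[THEN iffD2]) auto

lemma coeff_Yp: "coeff (Yp n \<alpha> \<beta>) k = jc n \<alpha> \<beta> k"
  unfolding Yp_def coeff_sum by (cases "k \<le> n") (auto simp: jc_zero)

lemma poly_Tp: "poly Tp x = (1 - x) / 2"
  by (simp add: Tp_def)

lemma poly_jp: "poly (jp n \<alpha> \<beta>) x = jacobiP n \<alpha> \<beta> x"
  unfolding jp_def jacobiP_def Yp_def poly_pcompose poly_sum poly_monom poly_Tp jc_def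
  by (simp add: sum_distrib_left mult_ac)

lemma jacobiP_jp: "jacobiP n \<alpha> \<beta> = poly (jp n \<alpha> \<beta>)"
  by (rule ext) (simp add: poly_jp)

lemma jc_top_nz:
  assumes "\<alpha> > -1" "\<beta> > -1"
  shows "jc n \<alpha> \<beta> n \<noteq> 0"
proof -
  have g1: "Gamma (real n + \<alpha> + 1) > 0" using assms by (intro Gamma_real_pos) auto
  have g2: "Gamma (\<alpha> + 1) > 0" using assms by (intro Gamma_real_pos) auto
  have p1: "pochhammer (- real n) n \<noteq> 0" by (subst pochhammer_eq_0_iff) auto
  have p2: "pochhammer (real n + \<alpha> + \<beta> + 1) n \<noteq> 0"
  proof (subst pochhammer_eq_0_iff, clarify)
    fix k assume "k < n" "real n + \<alpha> + \<beta> + 1 = - real k"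
    then show False using assms by linarith
  qed
  have p3: "pochhammer (\<alpha> + 1) n > 0" using assms by (intro pochhammer_pos) auto
  show ?thesis unfolding jc_def using g1 g2 p1 p2 p3 by simp
qed

lemma degree_Yp:
  assumes "\<alpha> > -1" "\<beta> > -1"
  shows "degree (Yp n \<alpha> \<beta>) = n"
proof (rule antisym)
  show "degree (Yp n \<alpha> \<beta>) \<le> n"
    by (rule degree_le) (simp add: coeff_Yp jc_zero)
  show "n \<le> degree (Yp n \<alpha> \<beta>)"
    by (rule le_degree) (simp add: coeff_Yp jc_top_nz assms)
qed

lemma degree_jp:
  assumes "\<alpha> > -1" "\<beta> > -1"
  shows "degree (jp n \<alpha> \<beta>) = n"
  by (simp add: jp_def degree_pcompose degree_Yp assms Tp_def)

lemma jc_deriv: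
  assumes "\<alpha> > -1"
  shows "real (Suc k) * jc (Suc m) \<alpha> \<beta> (Suc k) = - (real m + \<alpha> + \<beta> + 2) * jc m (\<alpha> + 1) (\<beta> + 1) k"
proof -
  have g: "Gamma (\<alpha> + 1 + 1) = (\<alpha> + 1) * Gamma (\<alpha> + 1)"
    by (rule Gamma_plus1) (use assms in \<open>auto dest: nonpos_Ints_nonpos\<close>)
  have g2: "Gamma (\<alpha> + 1) > 0" using assms by (intro Gamma_real_pos) auto
  have pa: "pochhammer (\<alpha> + 2) k > 0" using assms by (intro pochhammer_pos) auto
  have e1: "pochhammer (- real (Suc m)) (Suc k) = - (real m + 1) * pochhammer (- real m) k"
    by (simp add: pochhammer_rec algebra_simps)
  have e2: "pochhammer (real (Suc m) + \<alpha> + \<beta> + 1) (Suc k) = (real m + \<alpha> + \<beta> + 2) * pochhammer (real m + (\<alpha> + 1) + (\<beta> + 1) + 1) k"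
    by (simp add: pochhammer_rec algebra_simps)
  have e3: "pochhammer (\<alpha> + 1) (Suc k) = (\<alpha> + 1) * pochhammer (\<alpha> + 2) k"
    by (simp add: pochhammer_rec algebra_simps)
  have e4: "real (Suc m) + \<alpha> + 1 = real m + (\<alpha> + 1) + 1" by simp
  define G where "G = Gamma (real m + (\<alpha> + 1) + 1)"
  define A where "A = pochhammer (- real m) k"
  define B where "B = pochhammer (real m + (\<alpha> + 1) + (\<beta> + 1) + 1) k"
  define C where "C = pochhammer (\<alpha> + 2) k"
  define L where "L = real m + \<alpha> + \<beta> + 2"
  define a where "a = \<alpha> + 1"
  define g1 where "g1 = Gamma (\<alpha> + 1)"
  have "a > 0" "C > 0" "g1 > 0" using assms pa g2 by (auto simp: a_def C_def g1_def)
  moreover have "real k + 1 \<noteq> 0" "real m + 1 \<noteq> 0" "fact k \<noteq> (0::real)" "fact m \<noteq> (0::real)" by auto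
  ultimately have "real (Suc k) * (G / (fact (Suc m) * g1) * (- (real m + 1) * A * (L * B) / (a * C * fact (Suc k)))) =
      - L * (G / (fact m * (a * g1)) * (A * B / (C * fact k)))"
    by (simp add: fact_Suc divide_simps) (simp add: algebra_simps)
  then show ?thesis
    unfolding jc_def e1 e2 e3 e4 using g
    by (simp add: G_def A_def B_def C_def L_def a_def g1_def algebra_simps del: of_nat_Suc)
qed

lemma pderiv_Yp:
  assumes "\<alpha> > -1"
  shows "pderiv (Yp (Suc m) \<alpha> \<beta>) = smult (-(real m + \<alpha> + \<beta> + 2)) (Yp m (\<alpha> + 1) (\<beta> + 1))"
  apply (rule poly_eqI)
  apply (simp only: coeff_pderiv coeff_smult coeff_Yp jc_deriv[OF assms])
  done

lemma pderiv_Tp: "pderiv Tp = [:-1/2:]"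
  by (simp add: Tp_def pderiv_pCons)

lemma pderiv_jp_gen: "pderiv (pcompose p Tp) = smult (-1/2) (pcompose (pderiv p) Tp)"
  by (simp add: pderiv_pcompose pderiv_Tp)

lemma pderiv_jp:
  assumes "\<alpha> > -1"
  shows "pderiv (jp (Suc m) \<alpha> \<beta>) = smult ((real m + \<alpha> + \<beta> + 2) / 2) (jp m (\<alpha> + 1) (\<beta> + 1))"
  apply (simp only: jp_def pderiv_jp_gen pderiv_Yp[OF assms] pcompose_smult smult_smult)
  apply (rule arg_cong[where f="\<lambda>c. smult c _"])
  apply (simp add: field_simps)
  done

lemma coeff_lin: "coeff (pCons a (pCons b 0) * Z) k = a * coeff Z k + (if k = 0 then 0 else b * coeff Z (k - 1))"
  by (cases k) (simp_all add: mult_pCons_left coeff_pCons)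

lemma coeff_quad: "coeff (pCons a (pCons b (pCons c 0)) * Z) k =
   a * coeff Z k + (if k = 0 then 0 else b * coeff Z (k - 1)) + (if k < 2 then 0 else c * coeff Z (k - 2))"
  by (cases k; cases "k - 1") (simp_all add: mult_pCons_left coeff_pCons add.assoc)

lemma jc_rec:
  assumes "\<alpha> > -1"
  shows "(real K + 1) * (real K + \<alpha> + 1) * jc n \<alpha> \<beta> (Suc K) = (real K - real n) * (real K + real n + \<alpha> + \<beta> + 1) * jc n \<alpha> \<beta> K"
proof -
  have p: "pochhammer (\<alpha> + 1) K > 0" using assms by (intro pochhammer_pos) auto
  have q: "real K + \<alpha> + 1 > 0" using assms by simp
  have f: "fact K \<noteq> (0::real)" by simp
  show ?thesis unfolding jc_def pochhammer_Suc fact_Suc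
    using p q f by (simp add: divide_simps) (simp add: algebra_simps)
qed

lemma ode_Y:
  assumes "\<alpha> > -1"
  shows "[:0, 1, -1:] * pderiv (pderiv (Yp n \<alpha> \<beta>)) + [:\<alpha> + 1, -(\<alpha> + \<beta> + 2):] * pderiv (Yp n \<alpha> \<beta>)
          + smult (real n * (real n + \<alpha> + \<beta> + 1)) (Yp n \<alpha> \<beta>) = 0"
proof (rule poly_eqI)
  fix k
  have r: "(real K + 1) * (real K + \<alpha> + 1) * jc n \<alpha> \<beta> (Suc K) = (real K - real n) * (real K + real n + \<alpha> + \<beta> + 1) * jc n \<alpha> \<beta> K" for K
    by (rule jc_rec[OF assms])
  show "coeff ([:0, 1, -1:] * pderiv (pderiv (Yp n \<alpha> \<beta>)) + [:\<alpha> + 1, -(\<alpha> + \<beta> + 2):] * pderiv (Yp n \<alpha> \<beta>)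
          + smult (real n * (real n + \<alpha> + \<beta> + 1)) (Yp n \<alpha> \<beta>)) k = coeff 0 k"
  proof (cases k)
    case 0
    then show ?thesis using r[of 0] by (simp add: coeff_quad coeff_lin coeff_pderiv coeff_Yp algebra_simps)
  next
    case (Suc j)
    have "(real (Suc j) + 1) * (real (Suc j) + \<alpha> + 1) * jc n \<alpha> \<beta> (Suc (Suc j)) =
      (real (Suc j) - real n) * (real (Suc j) + real n + \<alpha> + \<beta> + 1) * jc n \<alpha> \<beta> (Suc j)" by (rule r)
    then show ?thesis using Suc
      by (cases j) (simp_all add: coeff_quad coeff_lin coeff_pderiv coeff_Yp algebra_simps)
  qed
qed

lemma ode_jp:
  assumes "\<alpha> > -1"
  shows "(1 - x^2) * poly (pderiv (pderiv (jp n \<alpha> \<beta>))) x + (\<beta> - \<alpha> - (\<alpha> + \<beta> + 2) * x) * poly (pderiv (jp n \<alpha> \<beta>)) x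
         + real n * (real n + \<alpha> + \<beta> + 1) * poly (jp n \<alpha> \<beta>) x = 0"
proof -
  define t where "t = (1 - x) / 2"
  define Y where "Y = Yp n \<alpha> \<beta>"
  have "poly ([:0, 1, -1:] * pderiv (pderiv Y) + [:\<alpha> + 1, -(\<alpha> + \<beta> + 2):] * pderiv Y
          + smult (real n * (real n + \<alpha> + \<beta> + 1)) Y) t = 0"
    using ode_Y[OF assms] by (simp add: Y_def)
  then have e: "(t - t^2) * poly (pderiv (pderiv Y)) t + (\<alpha> + 1 - (\<alpha> + \<beta> + 2) * t) * poly (pderiv Y) t
      + real n * (real n + \<alpha> + \<beta> + 1) * poly Y t = 0"
    by (simp add: algebra_simps power2_eq_square)
  have j0: "poly (jp n \<alpha> \<beta>) x = poly Y t" by (simp add: jp_def Y_def poly_pcompose poly_Tp t_def)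
  have j1: "poly (pderiv (jp n \<alpha> \<beta>)) x = -1/2 * poly (pderiv Y) t"
    by (simp add: jp_def Y_def pderiv_jp_gen poly_pcompose poly_Tp t_def)
  have j2: "poly (pderiv (pderiv (jp n \<alpha> \<beta>))) x = 1/4 * poly (pderiv (pderiv Y)) t"
    by (simp add: jp_def Y_def pderiv_jp_gen pderiv_smult pderiv_minus poly_pcompose poly_Tp t_def)
  have "(1 - x^2) * poly (pderiv (pderiv (jp n \<alpha> \<beta>))) x + (\<beta> - \<alpha> - (\<alpha> + \<beta> + 2) * x) * poly (pderiv (jp n \<alpha> \<beta>)) x
         + real n * (real n + \<alpha> + \<beta> + 1) * poly (jp n \<alpha> \<beta>) x =
        (t - t^2) * poly (pderiv (pderiv Y)) t + (\<alpha> + 1 - (\<alpha> + \<beta> + 2) * t) * poly (pderiv Y) t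
      + real n * (real n + \<alpha> + \<beta> + 1) * poly Y t"
    unfolding j0 j1 j2 t_def by (simp add: field_simps power2_eq_square)
  with e show ?thesis by simp
qed

lemma wt_succ: "x \<in> {-1..1} \<Longrightarrow> wt (\<alpha> + 1) (\<beta> + 1) x = (1 - x^2) * wt \<alpha> \<beta> x"
  by (simp add: wt_def powr_add power2_eq_square algebra_simps)

lemma has_integral_poly_wt:
  assumes "\<alpha> > -1" "\<beta> > -1"
  shows "((\<lambda>x. poly p x * wt \<alpha> \<beta> x) has_integral integral {-1..1} (\<lambda>x. poly p x * wt \<alpha> \<beta> x)) {-1..1}"
  using wt_poly_integrable[OF assms] by (rule integrable_integral)

lemma sl_rel:
  assumes a: "\<alpha> > -1" and b: "\<beta> > -1"
  shows "real n * (real n + \<alpha> + \<beta> + 1) * integral {-1..1} (\<lambda>x. poly (jp n \<alpha> \<beta> * g) x * wt \<alpha> \<beta> x)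
       = integral {-1..1} (\<lambda>x. poly (pderiv (jp n \<alpha> \<beta>) * pderiv g) x * wt (\<alpha> + 1) (\<beta> + 1) x)"
proof -
  define P where "P = jp n \<alpha> \<beta>"
  define lam where "lam = real n * (real n + \<alpha> + \<beta> + 1)"
  define I1 where "I1 = integral {-1..1} (\<lambda>x. poly (P * g) x * wt \<alpha> \<beta> x)"
  define I2 where "I2 = integral {-1..1} (\<lambda>x. poly (pderiv P * pderiv g) x * wt \<alpha> \<beta> x * (1 - x^2))"
  have a1: "\<alpha> + 1 > -1" "\<beta> + 1 > -1" using a b by auto
  have h1: "((\<lambda>x. poly (P * g) x * wt \<alpha> \<beta> x) has_integral I1) {-1..1}"
    unfolding I1_def by (rule has_integral_poly_wt[OF a b])
  have h2': "((\<lambda>x. poly (pderiv P * pderiv g) x * wt (\<alpha>+1) (\<beta>+1) x) has_integral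
              integral {-1..1} (\<lambda>x. poly (pderiv P * pderiv g) x * wt (\<alpha>+1) (\<beta>+1) x)) {-1..1}"
    by (rule has_integral_poly_wt[OF a1])
  have eqI: "integral {-1..1} (\<lambda>x. poly (pderiv P * pderiv g) x * wt (\<alpha>+1) (\<beta>+1) x) = I2"
    unfolding I2_def by (rule integral_cong) (simp add: wt_succ)
  have h2: "((\<lambda>x. poly (pderiv P * pderiv g) x * wt \<alpha> \<beta> x * (1 - x^2)) has_integral I2) {-1..1}"
  proof -
    have "((\<lambda>x. poly (pderiv P * pderiv g) x * wt \<alpha> \<beta> x * (1 - x^2)) has_integral
              integral {-1..1} (\<lambda>x. poly (pderiv P * pderiv g) x * wt (\<alpha>+1) (\<beta>+1) x)) {-1..1}"
      by (rule has_integral_eq[OF _ h2']) (simp add: wt_succ)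
    then show ?thesis using eqI by simp
  qed
  have h3: "((\<lambda>x. (- lam) * (poly (P * g) x * wt \<alpha> \<beta> x) + poly (pderiv P * pderiv g) x * wt \<alpha> \<beta> x * (1 - x^2))
        has_integral (- lam * I1 + I2)) {-1..1}"
    by (intro has_integral_add has_integral_mult_right h1 h2)
  have h0: "((\<lambda>x. poly ([:\<beta> - \<alpha>, -(\<alpha> + \<beta> + 2):] * (pderiv P * g) + [:1, 0, -1:] * pderiv (pderiv P * g)) x * wt \<alpha> \<beta> x)
          has_integral 0) {-1..1}"
    by (rule ibp_zero[OF a b])
  have pw: "poly ([:\<beta> - \<alpha>, -(\<alpha> + \<beta> + 2):] * (pderiv P * g) + [:1, 0, -1:] * pderiv (pderiv P * g)) x * wt \<alpha> \<beta> x
       = (- lam) * (poly (P * g) x * wt \<alpha> \<beta> x) + poly (pderiv P * pderiv g) x * wt \<alpha> \<beta> x * (1 - x^2)" for x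
  proof -
    have o: "(1 - x^2) * poly (pderiv (pderiv P)) x + (\<beta> - \<alpha> - (\<alpha> + \<beta> + 2) * x) * poly (pderiv P) x
         + lam * poly P x = 0" unfolding P_def lam_def by (rule ode_jp[OF a])
    have "poly ([:\<beta> - \<alpha>, -(\<alpha> + \<beta> + 2):] * (pderiv P * g) + [:1, 0, -1:] * pderiv (pderiv P * g)) x
        = poly g x * ((1 - x^2) * poly (pderiv (pderiv P)) x + (\<beta> - \<alpha> - (\<alpha> + \<beta> + 2) * x) * poly (pderiv P) x)
          + (1 - x^2) * poly (pderiv P) x * poly (pderiv g) x"
      by (simp add: pderiv_mult algebra_simps power2_eq_square)
    also have "\<dots> = poly g x * (- lam * poly P x) + (1 - x^2) * poly (pderiv P) x * poly (pderiv g) x"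
    proof -
      have o': "(1 - x^2) * poly (pderiv (pderiv P)) x + (\<beta> - \<alpha> - (\<alpha> + \<beta> + 2) * x) * poly (pderiv P) x = - lam * poly P x"
        using o by linarith
      show ?thesis by (simp only: o')
    qed
    finally have e: "poly ([:\<beta> - \<alpha>, -(\<alpha> + \<beta> + 2):] * (pderiv P * g) + [:1, 0, -1:] * pderiv (pderiv P * g)) x
       = poly g x * (- lam * poly P x) + (1 - x^2) * poly (pderiv P) x * poly (pderiv g) x" .
    show ?thesis unfolding e by (simp add: algebra_simps)
  qed
  have "((\<lambda>x. (- lam) * (poly (P * g) x * wt \<alpha> \<beta> x) + poly (pderiv P * pderiv g) x * wt \<alpha> \<beta> x * (1 - x^2))
        has_integral 0) {-1..1}"
    using h0 pw by simp
  with h3 have "- lam * I1 + I2 = 0" by (rule has_integral_unique)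
  then show ?thesis using eqI by (simp add: P_def lam_def I1_def)
qed

definition JI :: "real \<Rightarrow> real \<Rightarrow> real poly \<Rightarrow> real" where
  "JI \<alpha> \<beta> p = integral {-1..1} (\<lambda>x. poly p x * wt \<alpha> \<beta> x)"

lemma JI_smult: "JI \<alpha> \<beta> (smult c p) = c * JI \<alpha> \<beta> p"
  unfolding JI_def by (simp add: mult.assoc)

lemma JI_zero: "JI \<alpha> \<beta> 0 = 0"
  unfolding JI_def by simp

lemma jp0: "\<alpha> > -1 \<Longrightarrow> jp 0 \<alpha> \<beta> = 1"
proof -
  assume "\<alpha> > -1"
  then have "Gamma (\<alpha> + 1) > 0" by (intro Gamma_real_pos) auto
  then show ?thesis
    by (intro poly_eqI) (simp add: jp_def Yp_def jc_def pcompose_1 coeff_1)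
qed

lemma gamma_step:
  assumes a: "\<alpha> > -1" and b: "\<beta> > -1"
  shows "jacobi_gamma (Suc m) \<alpha> \<beta> = (real m + \<alpha> + \<beta> + 2) / (4 * (real m + 1)) * jacobi_gamma m (\<alpha> + 1) (\<beta> + 1)"
proof -
  have ni: "z > 0 \<Longrightarrow> z \<notin> \<int>\<^sub>\<le>\<^sub>0" for z :: real by (auto dest: nonpos_Ints_nonpos)
  have pw: "2 powr (\<alpha> + 1 + (\<beta> + 1) + 1) = 4 * 2 powr (\<alpha> + \<beta> + 1)"
  proof -
    have e: "\<alpha> + 1 + (\<beta> + 1) + 1 = (\<alpha> + \<beta> + 1) + 2" by simp
    show ?thesis by (simp only: e powr_add) simp
  qed
  show ?thesis
  proof (cases m)
    case 0
    define s where "s = \<alpha> + \<beta> + 2"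
    have s0: "s > 0" using a b by (simp add: s_def)
    have G: "Gamma (s + 2) = (s + 1) * s * Gamma s"
      using Gamma_plus1[OF ni[of "s+1"]] Gamma_plus1[OF ni[of s]] s0
      by (simp add: algebra_simps)
    have Gs: "Gamma s > 0" using s0 by (rule Gamma_real_pos)
    have e1: "real (Suc 0) + \<alpha> + 1 = \<alpha> + 1 + 1" "real (Suc 0) + \<beta> + 1 = \<beta> + 1 + 1"
      "2 * real (Suc 0) + \<alpha> + \<beta> + 1 = s + 1" "real (Suc 0) + \<alpha> + \<beta> + 1 = s"
      "\<alpha> + 1 + (\<beta> + 1) + 2 = s + 2" by (simp_all add: s_def)
    have G2: "Gamma (\<alpha> + 1 + (\<beta> + 1) + 2) = (s + 1) * s * Gamma s" using G by (simp add: s_def add_ac)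
    have e2: "real 0 + \<alpha> + \<beta> + 2 = s" "real 0 + 1 = (1::real)" "fact (Suc 0) = (1::real)" by (simp_all add: s_def)
    have aux: "\<And>u v w. u * v * w / ((s + 1) * 1 * Gamma s) = s / (4 * 1) * (4 * u * v * w / ((s + 1) * s * Gamma s))"
    proof -
      fix u v w
      have "s + 1 \<noteq> 0" "s \<noteq> 0" using s0 by auto
      moreover have "Gamma s \<noteq> 0" using Gs by linarith
      ultimately show "u * v * w / ((s + 1) * 1 * Gamma s) = s / (4 * 1) * (4 * u * v * w / ((s + 1) * s * Gamma s))"
        by (simp add: divide_simps; simp add: algebra_simps)
    qed
    show ?thesis unfolding 0 jacobi_gamma_def
      by (simp only: nat.distinct if_False if_True simp_thms(6) e1 e2 pw G G2 aux)
  next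
    case (Suc k)
    define s where "s = \<alpha> + \<beta> + 2"
    have s0: "real m + s > 0" using a b by (simp add: s_def)
    have G: "Gamma (real m + s + 1) = (real m + s) * Gamma (real m + s)"
      using Gamma_plus1[OF ni[of "real m + s"]] s0 by simp
    have Gs: "Gamma (real m + s) > 0" using s0 by (rule Gamma_real_pos)
    have e1: "real (Suc m) + \<alpha> + 1 = real m + (\<alpha> + 1) + 1" "real (Suc m) + \<beta> + 1 = real m + (\<beta> + 1) + 1"
      "2 * real (Suc m) + \<alpha> + \<beta> + 1 = 2 * real m + (\<alpha> + 1) + (\<beta> + 1) + 1"
      "real (Suc m) + \<alpha> + \<beta> + 1 = real m + s"
      "real m + (\<alpha> + 1) + (\<beta> + 1) + 1 = real m + s + 1" by (simp_all add: s_def)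
    have d: "2 * real m + (\<alpha> + 1) + (\<beta> + 1) + 1 > 0" using a b by simp
    have f: "fact (Suc m) = (real m + 1) * fact m" by (simp add: fact_Suc)
    have fm: "fact m > (0::real)" by simp
    have e3: "real m + \<alpha> + \<beta> + 2 = real m + s" by (simp add: s_def)
    have mz: "(m = 0) = False" "(Suc m = 0) = False" using Suc by auto
    have aux: "\<And>u v w. u * v * w / ((2 * real m + (\<alpha> + 1) + (\<beta> + 1) + 1) * ((real m + 1) * fact m) * Gamma (real m + s))
       = (real m + s) / (4 * (real m + 1)) * (4 * u * v * w / ((2 * real m + (\<alpha> + 1) + (\<beta> + 1) + 1) * fact m * ((real m + s) * Gamma (real m + s))))"
    proof -
      fix u v w
      have "real m + s \<noteq> 0" "real m + 1 \<noteq> 0" "2 * real m + (\<alpha> + 1) + (\<beta> + 1) + 1 \<noteq> 0" "fact m \<noteq> (0::real)"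
        using s0 d by auto
      moreover have "Gamma (real m + s) \<noteq> 0" using Gs by linarith
      ultimately show "u * v * w / ((2 * real m + (\<alpha> + 1) + (\<beta> + 1) + 1) * ((real m + 1) * fact m) * Gamma (real m + s))
       = (real m + s) / (4 * (real m + 1)) * (4 * u * v * w / ((2 * real m + (\<alpha> + 1) + (\<beta> + 1) + 1) * fact m * ((real m + s) * Gamma (real m + s))))"
        by (simp add: divide_simps; simp add: algebra_simps)
    qed
    show ?thesis unfolding jacobi_gamma_def
      by (simp only: mz if_False e1 e3 pw f G aux)
  qed
qed

lemma orth_norm:
  "\<alpha> > -1 \<Longrightarrow> \<beta> > -1 \<Longrightarrow> (\<forall>g. degree g < n \<longrightarrow> JI \<alpha> \<beta> (jp n \<alpha> \<beta> * g) = 0) \<and>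
     JI \<alpha> \<beta> (jp n \<alpha> \<beta> * jp n \<alpha> \<beta>) = jacobi_gamma n \<alpha> \<beta>"
proof (induction n arbitrary: \<alpha> \<beta>)
  case 0
  have "(wt \<alpha> \<beta> has_integral 2 powr (\<alpha> + \<beta> + 1) * Beta (\<alpha> + 1) (\<beta> + 1)) {-1..1}"
    by (rule wt_has_integral) (use 0 in auto)
  then have "integral {-1..1} (wt \<alpha> \<beta>) = 2 powr (\<alpha> + \<beta> + 1) * Beta (\<alpha> + 1) (\<beta> + 1)"
    by (rule integral_unique)
  moreover have "\<alpha> + 1 + (\<beta> + 1) = \<alpha> + \<beta> + 2" by simp
  ultimately show ?case using 0 by (simp add: JI_def jp0 jacobi_gamma_def Beta_def)
next
  case (Suc m)
  note a = Suc.prems(1) and b = Suc.prems(2)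
  have a1: "\<alpha> + 1 > -1" "\<beta> + 1 > -1" using a b by auto
  note IH = Suc.IH[OF a1]
  define P where "P = jp (Suc m) \<alpha> \<beta>"
  define Q where "Q = jp m (\<alpha> + 1) (\<beta> + 1)"
  define c where "c = (real m + \<alpha> + \<beta> + 2) / 2"
  define lam where "lam = real (Suc m) * (real (Suc m) + \<alpha> + \<beta> + 1)"
  have lam0: "lam > 0" using a b by (simp add: lam_def)
  have dP: "pderiv P = smult c Q" unfolding P_def Q_def c_def by (rule pderiv_jp[OF a])
  have sl: "lam * JI \<alpha> \<beta> (P * g) = c * JI (\<alpha> + 1) (\<beta> + 1) (Q * pderiv g)" for g
    using sl_rel[OF a b, of "Suc m" g] unfolding JI_def[symmetric] P_def[symmetric] lam_def[symmetric] dP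
    by (simp add: JI_smult)
  have orth: "JI \<alpha> \<beta> (P * g) = 0" if "degree g < Suc m" for g
  proof -
    have "JI (\<alpha> + 1) (\<beta> + 1) (Q * pderiv g) = 0"
    proof (cases "pderiv g = 0")
      case True then show ?thesis by (simp add: JI_zero)
    next
      case False
      then have "degree g \<noteq> 0" using pderiv_eq_0_iff by blast
      then have "degree (pderiv g) < m" using that by (simp add: degree_pderiv)
      then show ?thesis using IH unfolding Q_def by blast
    qed
    then have "lam * JI \<alpha> \<beta> (P * g) = 0" using sl by simp
    then show ?thesis using lam0 by simp
  qed
  have "lam * JI \<alpha> \<beta> (P * P) = c * JI (\<alpha> + 1) (\<beta> + 1) (Q * smult c Q)" using sl[of P] dP by simp
  also have "\<dots> = c * c * jacobi_gamma m (\<alpha> + 1) (\<beta> + 1)"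
    using IH by (simp add: Q_def JI_smult)
  finally have "JI \<alpha> \<beta> (P * P) = c * c * jacobi_gamma m (\<alpha> + 1) (\<beta> + 1) / lam"
    using lam0 by (simp add: field_simps)
  also have "\<dots> = jacobi_gamma (Suc m) \<alpha> \<beta>"
  proof -
    have p: "real m + \<alpha> + \<beta> + 2 > 0" using a b by simp
    define L where "L = real m + \<alpha> + \<beta> + 2"
    have lamL: "lam = (real m + 1) * L" by (simp add: lam_def L_def algebra_simps)
    have L0: "L > 0" "real m + 1 > 0" using p by (auto simp: L_def)
    have "c * c / lam = L / (4 * (real m + 1))"
    proof -
      have "L \<noteq> 0" "real m + 1 \<noteq> 0" using L0 by auto
      then show ?thesis unfolding lamL c_def L_def[symmetric] by (simp add: divide_simps; simp add: algebra_simps)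
    qed
    then have "c * c / lam = (real m + \<alpha> + \<beta> + 2) / (4 * (real m + 1))" by (simp add: L_def)
    then show ?thesis unfolding gamma_step[OF a b, of m] by (metis times_divide_eq_left mult.commute)
  qed
  finally show ?case using orth by (simp add: P_def)
qed

lemma wt_pos: "y \<in> {-1<..<1} \<Longrightarrow> wt \<alpha> \<beta> y > 0"
  by (auto simp: wt_def)

lemma wt_nonneg: "y \<in> {-1..1} \<Longrightarrow> wt \<alpha> \<beta> y \<ge> 0"
  by (auto simp: wt_def)

lemma pos_int_zero:
  assumes a: "\<alpha> > -1" "\<beta> > -1"
    and nn: "\<And>y. y \<in> {-1<..<1} \<Longrightarrow> poly p y \<ge> 0"
    and I: "((\<lambda>y. poly p y * wt \<alpha> \<beta> y) has_integral 0) {-1..1}"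
  shows "p = 0"
proof (rule ccontr)
  assume p0: "p \<noteq> 0"
  define f where "f y = poly p y * wt \<alpha> \<beta> y" for y
  have fnn: "f y \<ge> 0" if "y \<in> {-1..1}" for y
  proof (cases "y = -1 \<or> y = 1")
    case True then show ?thesis by (auto simp: f_def wt_def)
  next
    case False
    with that have "y \<in> {-1<..<1}" by auto
    then show ?thesis unfolding f_def using nn wt_pos by (simp add: less_imp_le)
  qed
  have sub: "{-1/2..1/2} \<subseteq> {-1..1::real}" by auto
  have If: "(f has_integral 0) {-1..1}" using I by (simp add: f_def[abs_def])
  have intf: "f integrable_on {-1/2..1/2}"
    using integrable_subinterval_real[OF has_integral_integrable[OF If] sub] .
  have le: "integral {-1/2..1/2} f \<le> 0"
    using has_integral_subset_le[OF sub integrable_integral[OF intf] If] fnn by auto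
  have ge: "integral {-1/2..1/2} f \<ge> 0"
    by (rule integral_nonneg[OF intf]) (use fnn sub in auto)
  have I2: "(f has_integral 0) (cbox (-1/2) (1/2))"
    using integrable_integral[OF intf] le ge by simp
  have cont: "continuous_on (cbox (-1/2) (1/2)) f"
    unfolding f_def wt_def by (intro continuous_intros) auto
  have "poly p y = 0" if y: "y \<in> {-1/2..1/2}" for y
  proof -
    have "f y = 0"
      by (rule has_integral_0_cbox_imp_0[OF cont _ I2]) (use fnn y in auto)
    moreover have "wt \<alpha> \<beta> y > 0" using y by (intro wt_pos) auto
    ultimately show ?thesis by (simp add: f_def)
  qed
  then have "{-1/2..1/2::real} \<subseteq> {y. poly p y = 0}" by auto
  moreover have "finite {y. poly p y = 0}" using p0 by (rule poly_roots_finite)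
  ultimately have "finite {-1/2..1/2::real}" by (rule finite_subset)
  moreover have "\<not> finite {-1/2..1/2::real}" by (rule infinite_Icc) simp
  ultimately show False by blast
qed

lemma deriv_jacobiP: "deriv (jacobiP N \<alpha> \<beta>) y = poly (pderiv (jp N \<alpha> \<beta>)) y"
  unfolding jacobiP_jp by (rule DERIV_imp_deriv[OF poly_DERIV])

lemma simple_root:
  fixes D :: "real poly"
  assumes D0: "D \<noteq> 0" and cardR: "card {y. poly D y = 0} = degree D" and r: "poly D r = 0"
  shows "poly (pderiv D) r \<noteq> 0"
proof
  assume d: "poly (pderiv D) r = 0"
  from r obtain E where E: "D = [:-r, 1:] * E" using poly_eq_0_iff_dvd by (metis dvdE)
  have "poly (pderiv D) r = poly E r" by (simp only: E pderiv_mult) (simp add: pderiv_pCons)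
  with d have "poly E r = 0" by simp
  then obtain F where F: "E = [:-r, 1:] * F" using poly_eq_0_iff_dvd by (metis dvdE)
  have DF: "D = [:-r, 1:] * [:-r, 1:] * F" unfolding E F by (simp only: mult.assoc)
  have F0: "F \<noteq> 0" using D0 DF by auto
  have q0: "[:-r, 1:] * [:-r, 1:] \<noteq> (0::real poly)" by simp
  have "degree D = degree ([:-r, 1:] * [:-r, 1:]) + degree F"
    unfolding DF by (rule degree_mult_eq[OF q0 F0])
  moreover have "degree ([:-r, 1:] * [:-r, 1::real:]) = 2" by (subst degree_mult_eq) auto
  ultimately have degF: "degree D = degree F + 2" by simp
  have sub: "{y. poly D y = 0} - {r} \<subseteq> {y. poly F y = 0}"
  proof
    fix y assume y: "y \<in> {y. poly D y = 0} - {r}"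
    then have "(y - r) * (y - r) * poly F y = 0" by (simp add: DF algebra_simps)
    moreover have "y - r \<noteq> 0" using y by auto
    ultimately show "y \<in> {y. poly F y = 0}" by simp
  qed
  have fin: "finite {y. poly D y = 0}" using D0 by (rule poly_roots_finite)
  have c1: "card ({y. poly D y = 0} - {r}) = degree D - 1" using cardR r fin by (simp add: card_Diff_singleton)
  have c2: "card ({y. poly D y = 0} - {r}) \<le> card {y. poly F y = 0}"
    by (rule card_mono[OF poly_roots_finite[OF F0] sub])
  have c3: "card {y. poly F y = 0} \<le> degree F" by (rule card_poly_roots_bound[OF F0])
  show False using c1 c2 c3 degF by linarith
qed

lemma nodes_props:
  assumes N: "N \<ge> 3" and a: "\<alpha> > -1" "\<beta> > -1"
    and nodes: "JGL_nodes N \<alpha> \<beta> xs" and weights: "JGL_weights N \<alpha> \<beta> xs w"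
  shows "xs 0 = -1 \<and> xs N = 1 \<and> poly (pderiv (jp N \<alpha> \<beta>)) (-1) \<noteq> 0 \<and>
     (\<forall>j. 0 < j \<and> j < N \<longrightarrow> -1 < xs j \<and> xs j < 1 \<and> poly (pderiv (jp N \<alpha> \<beta>)) (xs j) = 0
        \<and> poly (pderiv (pderiv (jp N \<alpha> \<beta>))) (xs j) \<noteq> 0)"
proof -
  define D where "D = pderiv (jp N \<alpha> \<beta>)"
  have mono: "\<And>i j. i < j \<Longrightarrow> j \<le> N \<Longrightarrow> xs i < xs j" using nodes by (auto simp: JGL_nodes_def)
  define Z where "Z = xs ` {0..N}"
  have Zeq: "Z = {y. (1 - y^2) * poly D y = 0}"
    using nodes by (simp add: JGL_nodes_def Z_def deriv_jacobiP D_def)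
  define R where "R = {y. poly D y = 0}"
  have degD: "degree D = N - 1" using a by (simp add: D_def degree_pderiv degree_jp)
  have D0: "D \<noteq> 0" using degD N by auto
  have finR: "finite R" unfolding R_def using D0 by (rule poly_roots_finite)
  have cardR: "card R \<le> N - 1" unfolding R_def using card_poly_roots_bound[OF D0] degD by simp
  have inj: "inj_on xs {0..N}"
  proof (rule inj_onI)
    fix i j assume "i \<in> {0..N}" "j \<in> {0..N}" "xs i = xs j"
    then show "i = j" using mono[of i j] mono[of j i] by (cases i j rule: linorder_cases) auto
  qed
  have cardZ: "card Z = N + 1" unfolding Z_def using card_image[OF inj] by simp
  have sq: "(1 - y^2 = 0) = (y = -1 \<or> y = 1)" for y :: real
  proof -
    have "1 - y^2 = (1 - y) * (1 + y)" by (simp add: power2_eq_square algebra_simps)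
    then show ?thesis by auto
  qed
  have ZU: "Z = {-1, 1} \<union> R" unfolding Zeq R_def using sq by auto
  have "card {-1, 1::real} + card R = card Z + card ({-1, 1} \<inter> R)"
    unfolding ZU by (rule card_Un_Int) (auto simp: finR)
  then have c2: "2 + card R = N + 1 + card ({-1, 1} \<inter> R)" using cardZ by simp
  have c0: "card ({-1, 1} \<inter> R) = 0" using c2 cardR N by linarith
  have cardR': "card R = N - 1" using c2 cardR N by linarith
  from c0 have disj: "{-1, 1} \<inter> R = {}" using finR by simp
  then have m1: "-1 \<notin> R" and p1: "1 \<notin> R" by auto
  have Rin: "R \<subseteq> {-1<..<1}"
  proof (rule ccontr)
    assume "\<not> R \<subseteq> {-1<..<1}"
    define RI where "RI = R \<inter> {-1<..<1}"
    define RO where "RO = R - RI"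
    have RO_ne: "RO \<noteq> {}" using \<open>\<not> R \<subseteq> {-1<..<1}\<close> by (auto simp: RO_def RI_def)
    have finRI: "finite RI" "finite RO" using finR by (auto simp: RI_def RO_def)
    have RO_out: "r < -1 \<or> r > 1" if "r \<in> RO" for r
    proof -
      have "r \<noteq> -1" "r \<noteq> 1" "r \<notin> {-1<..<1}" using that m1 p1 by (auto simp: RO_def RI_def)
      then show ?thesis by auto
    qed
    have cRIO: "card RI + card RO = N - 1"
    proof -
      have "R = RI \<union> RO" "RI \<inter> RO = {}" by (auto simp: RI_def RO_def)
      then show ?thesis using card_Un_disjoint[OF finRI] cardR' by simp
    qed
    have cRO: "card RO \<ge> 1" using RO_ne finRI(2) by (simp add: Suc_le_eq card_gt_0_iff)
    define h where "h = (\<Prod>r\<in>RI. [:-r, 1:])"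
    define k where "k = (\<Prod>r\<in>RO. [:-r, 1:])"
    define p where "p = smult (poly k 0) ([:1, 0, -1:] * (h * h) * k)"
    have degh: "degree h \<le> card RI" unfolding h_def
      using degree_prod_sum_le[OF finRI(1), of "\<lambda>r. [:-r, 1:]"] by simp
    have degk: "degree k \<le> card RO" unfolding k_def
      using degree_prod_sum_le[OF finRI(2), of "\<lambda>r. [:-r, 1:]"] by simp
    have "degree p \<le> degree ([:1, 0, -1:] * (h * h) * k)" unfolding p_def by (rule degree_smult_le)
    also have "\<dots> \<le> 2 + (degree h + degree h) + degree k"
      by (intro order.trans[OF degree_mult_le] add_mono order.refl) (auto intro: order.trans[OF degree_mult_le])
    also have "\<dots> \<le> 2 * N - 1" using degh degk cRIO cRO N by linarith
    finally have degp: "degree p \<le> 2 * N - 1" .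
    have Q: "((\<lambda>y. poly p y * (1 - y) powr \<alpha> * (1 + y) powr \<beta>) has_integral (\<Sum>j\<le>N. poly p (xs j) * w j)) {-1..1}"
      using weights degp by (simp add: JGL_weights_def)
    have zero_nodes: "poly p (xs j) = 0" if "j \<le> N" for j
    proof -
      have "xs j \<in> Z" using that by (simp add: Z_def)
      then consider "xs j = -1 \<or> xs j = 1" | "xs j \<in> RI" | "xs j \<in> RO" unfolding ZU RO_def by auto
      then show ?thesis
      proof cases
        case 1 then show ?thesis by (auto simp: p_def)
      next
        case 2 then have "poly h (xs j) = 0" unfolding h_def poly_prod using finRI
          by (auto intro!: prod_zero)
        then show ?thesis by (simp add: p_def)
      next
        case 3 then have "poly k (xs j) = 0" unfolding k_def poly_prod using finRI
          by (auto intro!: prod_zero)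
        then show ?thesis by (simp add: p_def)
      qed
    qed
    have "((\<lambda>y. poly p y * wt \<alpha> \<beta> y) has_integral 0) {-1..1}"
      using Q zero_nodes by (simp add: wt_def mult.assoc)
    moreover have "poly p y \<ge> 0" if y: "y \<in> {-1<..<1}" for y
    proof -
      have kk: "poly k y * poly k 0 = (\<Prod>r\<in>RO. (y - r) * (0 - r))"
        unfolding k_def poly_prod prod.distrib[symmetric] by simp
      have "(\<Prod>r\<in>RO. (y - r) * (0 - r)) > 0"
      proof (rule prod_pos)
        fix r assume "r \<in> RO"
        then have "r < -1 \<or> r > 1" by (rule RO_out)
        then show "(y - r) * (0 - r) > 0"
        proof
          assume "r < -1"
          then have "y - r > 0" "0 - r > 0" using y by auto
          then show ?thesis by (rule mult_pos_pos)
        next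
          assume "r > 1"
          then have "y - r < 0" "0 - r < 0" using y by auto
          then show ?thesis by (rule mult_neg_neg)
        qed
      qed
      moreover have "1 - y^2 \<ge> 0"
      proof -
        have "1 - y^2 = (1 - y) * (1 + y)" by (simp add: power2_eq_square algebra_simps)
        moreover have "(1 - y) * (1 + y) > 0" using y by (intro mult_pos_pos) auto
        ultimately show ?thesis by simp
      qed
      ultimately have "(1 - y^2) * ((poly h y * poly h y) * (poly k y * poly k 0)) \<ge> 0"
        using kk by (metis less_imp_le mult_nonneg_nonneg zero_le_square)
      then show ?thesis by (simp add: p_def algebra_simps power2_eq_square)
    qed
    ultimately have "p = 0" by (intro pos_int_zero[OF a]) auto
    moreover have "p \<noteq> 0"
    proof -
      have "0 \<notin> RO" using RO_out by fastforce
      then have k0: "poly k 0 \<noteq> 0" unfolding k_def poly_prod using finRI by auto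
      have "h \<noteq> 0" unfolding h_def using finRI by auto
      moreover have "k \<noteq> 0" unfolding k_def using finRI by auto
      moreover have "[:1, 0, -1::real:] \<noteq> 0" by simp
      ultimately have "[:1, 0, -1::real:] * (h * h) * k \<noteq> 0" by (metis mult_eq_0_iff)
      then show ?thesis using k0 unfolding p_def by (metis smult_eq_0_iff)
    qed
    ultimately show False by simp
  qed
  have ZI: "Z \<subseteq> {-1..1}" using Rin unfolding ZU by auto
  have x0: "xs 0 = -1"
  proof -
    have "-1 \<in> Z" unfolding ZU by simp
    then obtain i where i: "i \<le> N" "xs i = -1" unfolding Z_def by auto
    have "xs 0 \<in> Z" by (simp add: Z_def)
    then have "xs 0 \<ge> -1" using ZI by auto
    moreover have "xs 0 \<le> xs i" using mono[of 0 i] i by (cases i) auto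
    ultimately show ?thesis using i by simp
  qed
  have xN: "xs N = 1"
  proof -
    have "1 \<in> Z" unfolding ZU by simp
    then obtain i where i: "i \<le> N" "xs i = 1" unfolding Z_def by auto
    have "xs N \<in> Z" by (simp add: Z_def)
    then have "xs N \<le> 1" using ZI by auto
    moreover have "xs i \<le> xs N" using mono[of i N] i by (cases "i = N") auto
    ultimately show ?thesis using i by simp
  qed
  have inner: "-1 < xs j \<and> xs j < 1 \<and> poly D (xs j) = 0 \<and> poly (pderiv D) (xs j) \<noteq> 0"
    if j: "0 < j" "j < N" for j
  proof -
    have "xs j \<in> Z" using j by (simp add: Z_def)
    moreover have "xs 0 < xs j" "xs j < xs N" using mono j by auto
    ultimately have "xs j \<in> R" using x0 xN unfolding ZU by auto
    moreover have "card {y. poly D y = 0} = degree D" using cardR' degD by (simp add: R_def)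
    ultimately show ?thesis using Rin simple_root[OF D0] by (auto simp: R_def)
  qed
  show ?thesis using x0 xN inner m1 unfolding D_def R_def by auto
qed

lemma lagrange_unique:
  fixes p q :: "real poly"
  assumes N: "N \<ge> 1" and mono: "\<And>i j. i < j \<Longrightarrow> j \<le> N \<Longrightarrow> xs i < xs j"
    and dp: "degree p \<le> N - 1" and dq: "degree q \<le> N - 1"
    and eq: "\<And>i. i \<le> N - 1 \<Longrightarrow> poly p (xs i) = poly q (xs i)"
  shows "p = q"
proof (rule poly_eqI_degree[where A = "xs ` {..N-1}"])
  have inj: "inj_on xs {..N-1}"
  proof (rule inj_onI)
    fix i j assume "i \<in> {..N-1}" "j \<in> {..N-1}" "xs i = xs j"
    moreover have "i \<le> N" "j \<le> N" using \<open>i \<in> {..N-1}\<close> \<open>j \<in> {..N-1}\<close> by auto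
    ultimately show "i = j" using mono[of i j] mono[of j i] by (cases i j rule: linorder_cases) auto
  qed
  have "card (xs ` {..N-1}) = N" using card_image[OF inj] N by simp
  then show "card (xs ` {..N-1}) > degree p" "card (xs ` {..N-1}) > degree q" using dp dq N by auto
qed (use eq in auto)

lemma hval:
  assumes N: "N \<ge> 3" and a: "\<alpha> > -1" "\<beta> > -1"
    and nodes: "JGL_nodes N \<alpha> \<beta> xs" and weights: "JGL_weights N \<alpha> \<beta> xs w"
    and j: "j \<le> N - 1"
    and hd: "degree hj \<le> N - 1"
    and hl: "\<And>i. i \<le> N - 1 \<Longrightarrow> poly hj (xs i) = (if i = j then 1 else 0)"
  shows "poly hj 1 = (if j = 0 then - ((\<beta> + 1) / (\<alpha> + 1) * (jacobiP N \<alpha> \<beta> 1 / jacobiP N \<alpha> \<beta> (-1)))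
                      else - (1 / (\<alpha> + 1) * (jacobiP N \<alpha> \<beta> 1 / jacobiP N \<alpha> \<beta> (xs j))))"
proof -
  define P where "P = jp N \<alpha> \<beta>"
  define D where "D = pderiv P"
  define lam where "lam = real N * (real N + \<alpha> + \<beta> + 1)"
  have lam0: "lam > 0" using N a by (simp add: lam_def)
  have mono: "\<And>i j. i < j \<Longrightarrow> j \<le> N \<Longrightarrow> xs i < xs j" using nodes by (auto simp: JGL_nodes_def)
  note NP = nodes_props[OF N a nodes weights]
  have x0: "xs 0 = -1" and xN: "xs N = 1" and Dm1: "poly D (-1) \<noteq> 0" using NP by (auto simp: D_def P_def)
  have inner: "\<And>i. 0 < i \<Longrightarrow> i < N \<Longrightarrow> -1 < xs i \<and> xs i < 1 \<and> poly D (xs i) = 0 \<and> poly (pderiv D) (xs i) \<noteq> 0"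
    using NP by (auto simp: D_def P_def)
  have ode: "(1 - x^2) * poly (pderiv D) x + (\<beta> - \<alpha> - (\<alpha> + \<beta> + 2) * x) * poly D x + lam * poly P x = 0" for x
    unfolding D_def P_def lam_def by (rule ode_jp[OF a(1)])
  have D1: "2 * (\<alpha> + 1) * poly D 1 = lam * poly P 1" using ode[of 1] by (simp add: algebra_simps)
  have Dm: "2 * (\<beta> + 1) * poly D (-1) = - lam * poly P (-1)" using ode[of "-1"] by (simp add: algebra_simps)
  have degP: "degree P = N" unfolding P_def using a by (rule degree_jp)
  have degD: "degree D = N - 1" using degP by (simp add: D_def degree_pderiv)
  have N1: "N \<ge> 1" using N by simp
  have jP: "jacobiP N \<alpha> \<beta> = poly P" by (simp add: P_def jacobiP_jp)
  show ?thesis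
  proof (cases "j = 0")
    case True
    define g where "g = smult (1 / poly D (-1)) D"
    have "hj = g"
    proof (rule lagrange_unique[OF N1 mono hd])
      show "degree g \<le> N - 1" using degD by (simp add: g_def)
      fix i assume i: "i \<le> N - 1"
      show "poly hj (xs i) = poly g (xs i)"
      proof (cases "i = 0")
        case True then show ?thesis using hl[OF i] x0 Dm1 \<open>j = 0\<close> by (simp add: g_def)
      next
        case False then have "poly D (xs i) = 0" using inner[of i] i N by auto
        then show ?thesis using hl[OF i] False \<open>j = 0\<close> by (simp add: g_def)
      qed
    qed
    then have "poly hj 1 = poly D 1 / poly D (-1)" by (simp add: g_def)
    moreover have "poly P (-1) \<noteq> 0" using Dm Dm1 a by auto
    moreover have "poly D 1 / poly D (-1) = - ((\<beta> + 1) / (\<alpha> + 1) * (poly P 1 / poly P (-1)))"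
    proof -
      have e1: "poly D 1 = lam * poly P 1 / (2 * (\<alpha> + 1))" using D1 a by (simp add: field_simps)
      have e2: "poly D (-1) = - lam * poly P (-1) / (2 * (\<beta> + 1))" using Dm a by (simp add: field_simps)
      have nz: "\<alpha> + 1 \<noteq> 0" "\<beta> + 1 \<noteq> 0" "lam \<noteq> 0" using a lam0 by auto
      show ?thesis unfolding e1 e2 using nz \<open>poly P (-1) \<noteq> 0\<close> by (simp add: divide_simps; simp add: algebra_simps)
    qed
    ultimately show ?thesis using True jP by simp
  next
    case False
    then have j0: "0 < j" "j < N" using j N by auto
    define x where "x = xs j"
    from inner[OF j0] have xin: "-1 < x" "x < 1" and Dx: "poly D x = 0" and D'x: "poly (pderiv D) x \<noteq> 0"
      by (auto simp: x_def)
    define q where "q = [:1, 1:] * D"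
    have "poly q x = 0" by (simp add: q_def Dx)
    then obtain r where r: "q = [:-x, 1:] * r" using poly_eq_0_iff_dvd by (metis dvdE)
    have D0: "D \<noteq> 0" using degD N by auto
    have q0: "q \<noteq> 0" unfolding q_def using D0 by (metis mult_eq_0_iff pCons_eq_0_iff one_neq_zero)
    have r0: "r \<noteq> 0" using q0 r by auto
    have "degree q = degree [:1, 1::real:] + degree D" unfolding q_def by (rule degree_mult_eq) (use D0 in auto)
    then have degq: "degree q = N" using degD N by simp
    have "degree q = degree [:-x, 1::real:] + degree r" unfolding r by (rule degree_mult_eq) (use r0 in auto)
    then have degr: "degree r = N - 1" using degq by simp
    have rx: "poly r x = (1 + x) * poly (pderiv D) x"
    proof -
      have "pderiv q = [:-x, 1:] * pderiv r + r" by (simp only: r pderiv_mult) (simp add: pderiv_pCons)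
      moreover have "pderiv q = [:1, 1:] * pderiv D + D" by (simp only: q_def pderiv_mult) (simp add: pderiv_pCons)
      ultimately have "poly ([:-x, 1:] * pderiv r + r) x = poly ([:1, 1:] * pderiv D + D) x" by simp
      then show ?thesis using Dx by (simp add: algebra_simps)
    qed
    have rx0: "poly r x \<noteq> 0" using rx D'x xin by simp
    define g where "g = smult (1 / poly r x) r"
    have "hj = g"
    proof (rule lagrange_unique[OF N1 mono hd])
      show "degree g \<le> N - 1" using degr by (simp add: g_def)
      fix i assume i: "i \<le> N - 1"
      show "poly hj (xs i) = poly g (xs i)"
      proof (cases "i = j")
        case True then show ?thesis using hl[OF i] rx0 by (simp add: g_def x_def)
      next
        case False
        have "poly q (xs i) = 0"
        proof (cases "i = 0")
          case True then show ?thesis by (simp add: q_def x0)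
        next
          case False then show ?thesis using inner[of i] i N by (simp add: q_def)
        qed
        moreover have "xs i \<noteq> x"
        proof -
          have "i \<le> N" "j \<le> N" using i j by auto
          then show ?thesis using mono[of i j] mono[of j i] False unfolding x_def
            by (cases i j rule: linorder_cases) auto
        qed
        ultimately have "poly r (xs i) = 0" by (simp add: r)
        then show ?thesis using hl[OF i] False by (simp add: g_def)
      qed
    qed
    then have h1: "poly hj 1 = poly r 1 / poly r x" by (simp add: g_def)
    have r1: "(1 - x) * poly r 1 = 2 * poly D 1"
    proof -
      have "poly q 1 = (1 - x) * poly r 1" by (simp add: r algebra_simps)
      then show ?thesis by (simp add: q_def)
    qed
    have rxl: "(1 - x) * poly r x = - lam * poly P x"
    proof -
      have "(1 - x^2) * poly (pderiv D) x + lam * poly P x = 0" using ode[of x] Dx by simp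
      moreover have "(1 - x) * poly r x = (1 - x^2) * poly (pderiv D) x"
        unfolding rx by (simp add: power2_eq_square algebra_simps)
      ultimately show ?thesis by simp
    qed
    have Px: "poly P x \<noteq> 0" using rxl rx0 xin lam0 by auto
    have "poly r 1 / poly r x = ((1 - x) * poly r 1) / ((1 - x) * poly r x)" using xin by simp
    also have "\<dots> = 2 * poly D 1 / (- lam * poly P x)" by (simp only: r1 rxl)
    also have "\<dots> = - (1 / (\<alpha> + 1) * (poly P 1 / poly P x))"
    proof -
      have e1: "poly D 1 = lam * poly P 1 / (2 * (\<alpha> + 1))" using D1 a by (simp add: field_simps)
      have nz: "\<alpha> + 1 \<noteq> 0" "lam \<noteq> 0" using a lam0 by auto
      show ?thesis unfolding e1 using nz Px by (simp add: divide_simps; simp add: algebra_simps)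
    qed
    finally show ?thesis using h1 False jP by (simp add: x_def)
  qed
qed

lemma basis_exists:
  fixes B :: "nat \<Rightarrow> real poly"
  assumes dB: "\<And>k. degree (B k) = k" and nB: "\<And>k. B k \<noteq> 0"
  shows "degree p \<le> n \<Longrightarrow> \<exists>c. p = (\<Sum>k\<le>n. smult (c k) (B k))"
proof (induction n arbitrary: p)
  case 0
  have p0: "degree p = 0" using 0 by simp
  have b0: "degree (B 0) = 0" using dB by simp
  have "coeff (B 0) 0 \<noteq> 0" using nB[of 0] b0 by (metis leading_coeff_0_iff)
  then have "p = smult (coeff p 0 / coeff (B 0) 0) (B 0)"
  proof (intro poly_eqI)
    fix i assume "coeff (B 0) 0 \<noteq> 0"
    then show "coeff p i = coeff (smult (coeff p 0 / coeff (B 0) 0) (B 0)) i"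
      using p0 b0 by (cases i) (auto simp: coeff_eq_0)
  qed
  then show ?case by (intro exI[of _ "\<lambda>k. coeff p 0 / coeff (B 0) 0"]) simp
next
  case (Suc n)
  define c' where "c' = coeff p (Suc n) / lead_coeff (B (Suc n))"
  define p' where "p' = p - smult c' (B (Suc n))"
  have lc: "lead_coeff (B (Suc n)) \<noteq> 0" using nB by simp
  have "degree p' \<le> n"
  proof (rule degree_le, intro allI impI)
    fix i assume "n < i"
    then consider "i = Suc n" | "i > Suc n" by linarith
    then show "coeff p' i = 0"
    proof cases
      case 1 then show ?thesis using lc dB[of "Suc n"] by (simp add: p'_def c'_def)
    next
      case 2 then show ?thesis using Suc.prems dB[of "Suc n"] by (simp add: p'_def coeff_eq_0)
    qed
  qed
  then obtain c where c: "p' = (\<Sum>k\<le>n. smult (c k) (B k))" using Suc.IH by blast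
  define c2 where "c2 = (\<lambda>k. if k = Suc n then c' else c k)"
  have "p = p' + smult c' (B (Suc n))" by (simp add: p'_def)
  also have "\<dots> = (\<Sum>k\<le>Suc n. smult (c2 k) (B k))"
    unfolding c sum.atMost_Suc c2_def by simp
  finally show ?case by blast
qed

lemma basis_unique:
  fixes B :: "nat \<Rightarrow> real poly"
  assumes dB: "\<And>k. degree (B k) = k" and nB: "\<And>k. B k \<noteq> 0"
  shows "(\<Sum>k\<le>n. smult (c k) (B k)) = 0 \<Longrightarrow> k \<le> n \<Longrightarrow> c k = 0"
proof (induction n arbitrary: k)
  case 0
  then have "smult (c 0) (B 0) = 0" by simp
  then show ?case using 0 nB by auto
next
  case (Suc n)
  have "coeff (\<Sum>k\<le>Suc n. smult (c k) (B k)) (Suc n) = c (Suc n) * lead_coeff (B (Suc n))"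
  proof -
    have "coeff (\<Sum>k\<le>n. smult (c k) (B k)) (Suc n) = 0"
      unfolding coeff_sum using dB by (auto intro!: sum.neutral simp: coeff_eq_0)
    then show ?thesis by (simp add: dB)
  qed
  with Suc.prems(1) have "c (Suc n) * lead_coeff (B (Suc n)) = 0" by simp
  then have cs: "c (Suc n) = 0" using nB by simp
  then have "(\<Sum>k\<le>n. smult (c k) (B k)) = 0" using Suc.prems(1) by simp
  then show ?case using Suc.IH[of k] Suc.prems(2) cs by (cases "k = Suc n") auto
qed

lemma gamma_pos:
  assumes a: "\<alpha> > -1" "\<beta> > -1"
  shows "jacobi_gamma n \<alpha> \<beta> > 0"
proof (cases "n = 0")
  case True
  have "Gamma (\<alpha> + 1) > 0" "Gamma (\<beta> + 1) > 0" "Gamma (\<alpha> + \<beta> + 2) > 0"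
    using a by (auto intro!: Gamma_real_pos)
  then show ?thesis using True by (simp add: jacobi_gamma_def)
next
  case False
  then have "real n \<ge> 1" by simp
  then have "Gamma (real n + \<alpha> + 1) > 0" "Gamma (real n + \<beta> + 1) > 0" "Gamma (real n + \<alpha> + \<beta> + 1) > 0"
    "2 * real n + \<alpha> + \<beta> + 1 > 0"
    using a by (auto intro!: Gamma_real_pos)
  then show ?thesis using False by (simp add: jacobi_gamma_def)
qed

lemma JI_sum:
  assumes a: "\<alpha> > -1" "\<beta> > -1" and fin: "finite A"
  shows "JI \<alpha> \<beta> (\<Sum>i\<in>A. f i) = (\<Sum>i\<in>A. JI \<alpha> \<beta> (f i))"
proof -
  have "JI \<alpha> \<beta> (\<Sum>i\<in>A. f i) = integral {-1..1} (\<lambda>x. \<Sum>i\<in>A. poly (f i) x * wt \<alpha> \<beta> x)"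
    unfolding JI_def poly_sum sum_distrib_right ..
  also have "\<dots> = (\<Sum>i\<in>A. JI \<alpha> \<beta> (f i))"
    unfolding JI_def by (rule integral_sum[OF fin]) (rule wt_poly_integrable[OF a])
  finally show ?thesis .
qed

lemma orth_pair:
  assumes a: "\<alpha> > -1" "\<beta> > -1"
  shows "JI \<alpha> \<beta> (jp m \<alpha> \<beta> * jp k \<alpha> \<beta>) = (if m = k then jacobi_gamma m \<alpha> \<beta> else 0)"
proof (cases m k rule: linorder_cases)
  case less
  have c: "jp m \<alpha> \<beta> * jp k \<alpha> \<beta> = jp k \<alpha> \<beta> * jp m \<alpha> \<beta>" by (rule mult.commute)
  show ?thesis unfolding c using less orth_norm[OF a, of k] degree_jp[OF a, of m] by simp
next
  case equal
  then show ?thesis using orth_norm[OF a, of m] by simp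
next
  case greater
  then show ?thesis using orth_norm[OF a, of m] degree_jp[OF a, of k] by simp
qed

lemma jp_nz: "\<alpha> > -1 \<Longrightarrow> \<beta> > -1 \<Longrightarrow> jp k \<alpha> \<beta> \<noteq> 0"
  by (cases k) (auto simp: jp0 dest: arg_cong[where f=degree] simp: degree_jp)

lemma quad_value:
  assumes N: "N \<ge> 3" and a: "\<alpha> > -1" "\<beta> > -1"
    and weights: "JGL_weights N \<alpha> \<beta> xs w" and dp: "degree p \<le> 2 * N - 1"
  shows "JI \<alpha> \<beta> p = (\<Sum>i\<le>N. poly p (xs i) * w i)"
proof -
  have "((\<lambda>y. poly p y * (1 - y) powr \<alpha> * (1 + y) powr \<beta>) has_integral (\<Sum>i\<le>N. poly p (xs i) * w i)) {-1..1}"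
    using weights dp by (simp add: JGL_weights_def)
  then have "((\<lambda>y. poly p y * wt \<alpha> \<beta> y) has_integral (\<Sum>i\<le>N. poly p (xs i) * w i)) {-1..1}"
    by (simp add: wt_def mult.assoc)
  then show ?thesis unfolding JI_def by (rule integral_unique)
qed

lemma expand_rho:
  assumes N: "N \<ge> 3" and a: "\<alpha> > -1" "\<beta> > -1"
    and nodes: "JGL_nodes N \<alpha> \<beta> xs" and weights: "JGL_weights N \<alpha> \<beta> xs w"
    and j: "j \<le> N - 1"
    and hd: "degree hj \<le> N - 1"
    and hl: "\<And>i. i \<le> N - 1 \<Longrightarrow> poly hj (xs i) = (if i = j then 1 else 0)"
  shows "poly hj x = (\<Sum>n\<le>N - 1. rho \<alpha> \<beta> N xs w n j * jacobiP n \<alpha> \<beta> x)"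
proof -
  define B where "B k = jp k \<alpha> \<beta>" for k
  have dB: "\<And>k. degree (B k) = k" unfolding B_def using a by (rule degree_jp)
  have nB: "\<And>k. B k \<noteq> 0" unfolding B_def using a by (rule jp_nz)
  obtain c where c: "hj = (\<Sum>k\<le>N - 1. smult (c k) (B k))" using basis_exists[OF dB nB hd] by blast
  have x0: "xs 0 = -1" and xN: "xs N = 1" using nodes_props[OF N a nodes weights] by auto
  have NS: "N = Suc (N - 1)" using N by simp
  have sN: "(\<Sum>i\<le>N. f i) = (\<Sum>i\<le>N - 1. f i) + f N" for f :: "nat \<Rightarrow> real"
    by (metis NS sum.atMost_Suc)
  have cm: "c m = rho \<alpha> \<beta> N xs w m j" if m: "m \<le> N - 1" for m
  proof -
    have "JI \<alpha> \<beta> (B m * hj) = (\<Sum>k\<le>N - 1. c k * JI \<alpha> \<beta> (B m * B k))"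
      unfolding c sum_distrib_left mult_smult_right JI_sum[OF a finite_atMost] JI_smult ..
    also have "\<dots> = (\<Sum>k\<le>N - 1. if k = m then c m * jacobi_gamma m \<alpha> \<beta> else 0)"
      by (rule sum.cong) (auto simp: B_def orth_pair[OF a])
    also have "\<dots> = c m * jacobi_gamma m \<alpha> \<beta>" using m by simp
    finally have e1: "JI \<alpha> \<beta> (B m * hj) = c m * jacobi_gamma m \<alpha> \<beta>" .
    have "degree (B m * hj) \<le> 2 * N - 1"
      using degree_mult_le[of "B m" hj] dB[of m] hd m N by linarith
    then have "JI \<alpha> \<beta> (B m * hj) = (\<Sum>i\<le>N. poly (B m * hj) (xs i) * w i)"
      by (rule quad_value[OF N a weights])
    also have "\<dots> = (\<Sum>i\<le>N - 1. poly (B m * hj) (xs i) * w i) + poly (B m) 1 * poly hj 1 * w N"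
      by (simp only: sN) (simp add: xN)
    also have "(\<Sum>i\<le>N - 1. poly (B m * hj) (xs i) * w i) = (\<Sum>i\<le>N - 1. if i = j then poly (B m) (xs j) * w j else 0)"
      by (rule sum.cong) (auto simp: hl)
    also have "\<dots> = poly (B m) (xs j) * w j" using j by simp
    finally have e2: "JI \<alpha> \<beta> (B m * hj) = poly (B m) (xs j) * w j + poly (B m) 1 * poly hj 1 * w N" .
    have gp: "jacobi_gamma m \<alpha> \<beta> > 0" by (rule gamma_pos[OF a])
    have cval: "c m = (poly (B m) (xs j) * w j + poly (B m) 1 * poly hj 1 * w N) / jacobi_gamma m \<alpha> \<beta>"
      using e1 e2 gp by (simp add: field_simps)
    have hv: "poly hj 1 = (if j = 0 then - ((\<beta> + 1) / (\<alpha> + 1) * (jacobiP N \<alpha> \<beta> 1 / jacobiP N \<alpha> \<beta> (-1)))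
                      else - (1 / (\<alpha> + 1) * (jacobiP N \<alpha> \<beta> 1 / jacobiP N \<alpha> \<beta> (xs j))))"
      by (rule hval[OF N a nodes weights j hd hl])
    show ?thesis
    proof (cases "j = 0")
      case True
      then have hv0: "poly hj 1 = - ((\<beta> + 1) / (\<alpha> + 1) * (jacobiP N \<alpha> \<beta> 1 / jacobiP N \<alpha> \<beta> (-1)))"
        using hv by simp
      show ?thesis unfolding cval hv0 rho_def B_def poly_jp using True x0
        by (simp add: algebra_simps divide_simps)
    next
      case False
      then have hv0: "poly hj 1 = - (1 / (\<alpha> + 1) * (jacobiP N \<alpha> \<beta> 1 / jacobiP N \<alpha> \<beta> (xs j)))"
        using hv by simp
      show ?thesis unfolding cval hv0 rho_def B_def poly_jp using False
        by (simp add: algebra_simps divide_simps)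
    qed
  qed
  have "poly hj x = (\<Sum>k\<le>N - 1. c k * poly (B k) x)" unfolding c poly_sum by simp
  also have "\<dots> = (\<Sum>n\<le>N - 1. rho \<alpha> \<beta> N xs w n j * jacobiP n \<alpha> \<beta> x)"
    by (rule sum.cong) (simp_all add: cm B_def poly_jp)
  finally show ?thesis .
qed

lemma conn_coeff_expand:
  assumes ab: "\<alpha> > -1" "\<beta> > -1" and ab2: "a > -1" "b > -1"
  shows "jacobiP n \<alpha> \<beta> x = (\<Sum>k\<le>n. conn_coeff \<alpha> \<beta> a b k n * jacobiP k a b x)"
proof -
  define B where "B k = jp k a b" for k
  have dB: "\<And>k. degree (B k) = k" unfolding B_def using ab2 by (rule degree_jp)
  have nB: "\<And>k. B k \<noteq> 0" unfolding B_def using ab2 by (rule jp_nz)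
  obtain c where c: "jp n \<alpha> \<beta> = (\<Sum>k\<le>n. smult (c k) (B k))"
    using basis_exists[OF dB nB, of "jp n \<alpha> \<beta>" n] degree_jp[OF ab] by auto
  define c' where "c' k = (if k \<le> n then c k else 0)" for k
  have c'P: "(\<forall>k>n. c' k = 0) \<and> (\<forall>x. jacobiP n \<alpha> \<beta> x = (\<Sum>k\<le>n. c' k * jacobiP k a b x))"
  proof (intro conjI allI impI)
    fix k assume "n < k" then show "c' k = 0" by (simp add: c'_def)
  next
    fix x
    have "jacobiP n \<alpha> \<beta> x = poly (jp n \<alpha> \<beta>) x" by (simp add: poly_jp)
    also have "\<dots> = (\<Sum>k\<le>n. c k * jacobiP k a b x)" unfolding c poly_sum by (simp add: B_def poly_jp)
    also have "\<dots> = (\<Sum>k\<le>n. c' k * jacobiP k a b x)" by (rule sum.cong) (auto simp: c'_def)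
    finally show "jacobiP n \<alpha> \<beta> x = (\<Sum>k\<le>n. c' k * jacobiP k a b x)" .
  qed
  have uniq: "d = c'" if d: "(\<forall>k>n. d k = 0) \<and> (\<forall>x. jacobiP n \<alpha> \<beta> x = (\<Sum>k\<le>n. d k * jacobiP k a b x))" for d
  proof (rule ext)
    fix k
    have "(\<Sum>k\<le>n. smult (d k - c' k) (B k)) = 0"
    proof (subst poly_all_0_iff_0[symmetric], intro allI)
      fix x
      have "poly (\<Sum>k\<le>n. smult (d k - c' k) (B k)) x = (\<Sum>k\<le>n. d k * jacobiP k a b x) - (\<Sum>k\<le>n. c' k * jacobiP k a b x)"
        unfolding poly_sum sum_subtractf[symmetric] by (rule sum.cong) (auto simp: B_def poly_jp algebra_simps)
      also have "\<dots> = 0"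
      proof -
        have "(\<Sum>k\<le>n. d k * jacobiP k a b x) = jacobiP n \<alpha> \<beta> x" using d by simp
        moreover have "(\<Sum>k\<le>n. c' k * jacobiP k a b x) = jacobiP n \<alpha> \<beta> x" using c'P by simp
        ultimately show ?thesis by simp
      qed
      finally show "poly (\<Sum>k\<le>n. smult (d k - c' k) (B k)) x = 0" .
    qed
    then have "k \<le> n \<Longrightarrow> d k - c' k = 0" using basis_unique[OF dB nB, of "\<lambda>k. d k - c' k" n k] by simp
    then show "d k = c' k" using d by (cases "k \<le> n") (auto simp: c'_def)
  qed
  have T: "(THE c :: nat \<Rightarrow> real. (\<forall>k>n. c k = 0) \<and> (\<forall>x. jacobiP n \<alpha> \<beta> x = (\<Sum>k\<le>n. c k * jacobiP k a b x))) = c'"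
    apply (rule the_equality)
     apply (rule c'P)
    apply (erule uniq)
    done
  have cc: "conn_coeff \<alpha> \<beta> a b k n = c' k" for k by (simp add: conn_coeff_def T)
  show ?thesis using c'P by (simp add: cc)
qed

lemma sum_swap_tri:
  fixes f :: "nat \<Rightarrow> nat \<Rightarrow> real"
  shows "(\<Sum>n\<le>M. \<Sum>k\<le>n. f n k) = (\<Sum>k\<le>M. \<Sum>n=k..M. f n k)"
proof (induction M)
  case 0 then show ?case by simp
next
  case (Suc M)
  have "(\<Sum>n\<le>Suc M. \<Sum>k\<le>n. f n k) = (\<Sum>k\<le>M. \<Sum>n=k..M. f n k) + (\<Sum>k\<le>Suc M. f (Suc M) k)"
    using Suc by simp
  also have "\<dots> = (\<Sum>k\<le>M. (\<Sum>n=k..M. f n k) + f (Suc M) k) + f (Suc M) (Suc M)"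
    by (simp add: sum.distrib)
  also have "\<dots> = (\<Sum>k\<le>M. \<Sum>n=k..Suc M. f n k) + f (Suc M) (Suc M)"
    by (rule arg_cong2[where f="(+)"], rule sum.cong) (auto simp: sum.cl_ivl_Suc)
  also have "\<dots> = (\<Sum>k\<le>Suc M. \<Sum>n=k..Suc M. f n k)" by simp
  finally show ?case .
qed

lemma rec_core:
  fixes m i \<mu> G X :: real
  assumes m: "m \<ge> 0" and i: "i \<ge> 0" and mu: "1 < \<mu>" "\<mu> < 2"
  shows "2 * ((G * (m+1+\<mu>) / (m+1)) * X * (i-m-1) * (m+3+i) / ((\<mu>+1+i)*(i+1))) - 2 * ((G * (m+1+\<mu>) / (m+1)) * X)
   = (m+3)/(2*m+5) * ((G*(m+1+\<mu>)*(m+2+\<mu>)/((m+1)*(m+2))) * X * (-(m+2)) * (m+3+i) * (m+4+i) / ((m+3)*((\<mu>+1+i)*(i+1))))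
   + ((1 - 2*\<mu>)/((2*(m+1)+1)*(2*(m+1)+3)) + 1) * ((G * (m+1+\<mu>) / (m+1)) * X * (i-m-1) * (m+3+i) / ((\<mu>+1+i)*(i+1)))
   + (m+1+\<mu>)*(m+2-\<mu>)/((m+2)*(2*m+3)) * (G * X * (i-m-1)*(i-m)*(m+2) / (-(m+1)*((\<mu>+1+i)*(i+1))))"
proof -
  have nz: "m + 1 \<noteq> 0" "m + 2 \<noteq> 0" "m + 3 \<noteq> 0" "2*m+5 \<noteq> 0" "2*m+3 \<noteq> 0" "\<mu>+1+i \<noteq> 0" "i + 1 \<noteq> 0"
    "(2*(m+1)+1)*(2*(m+1)+3) \<noteq> 0" using assms by auto
  show ?thesis using nz by (simp add: divide_simps; simp add: algebra_simps)
qed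

lemma rec_core0:
  fixes m \<mu> G :: real
  assumes m: "m \<ge> 0" and mu: "1 < \<mu>" "\<mu> < 2"
  shows "2 * (G * (m+1+\<mu>) / (m+1))
   = (m+3)/(2*m+5) * (G*(m+1+\<mu>)*(m+2+\<mu>)/((m+1)*(m+2)))
   + ((1 - 2*\<mu>)/((2*(m+1)+1)*(2*(m+1)+3)) + 1) * (G * (m+1+\<mu>) / (m+1))
   + (m+1+\<mu>)*(m+2-\<mu>)/((m+2)*(2*m+3)) * G"
proof -
  have nz: "m + 1 \<noteq> 0" "m + 2 \<noteq> 0" "2*m+5 \<noteq> 0" "2*m+3 \<noteq> 0"
    "(2*(m+1)+1)*(2*(m+1)+3) \<noteq> 0" using assms by auto
  show ?thesis using nz by (simp add: divide_simps; simp add: algebra_simps)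
qed

lemma jc_mu: "jc l \<mu> (1 - \<mu>) k = Gamma (real l + \<mu> + 1) / (fact l * Gamma (\<mu> + 1)) *
     (pochhammer (- real l) k * pochhammer (real l + 2) k / (pochhammer (\<mu> + 1) k * fact k))"
proof -
  have e: "real l + \<mu> + (1 - \<mu>) + 1 = real l + 2" by simp
  show ?thesis unfolding jc_def e by (rule refl)
qed

lemma coeffs_rec:
  fixes m i :: nat and \<mu> :: real
  assumes mu: "1 < \<mu>" "\<mu> < 2"
  defines "G \<equiv> Gamma (real m + \<mu> + 1) / (fact m * Gamma (\<mu> + 1))"
  defines "X \<equiv> pochhammer (- real (Suc m)) i * pochhammer (real (Suc m) + 2) i / (pochhammer (\<mu> + 1) i * fact i)"
  shows "jc (Suc m) \<mu> (1 - \<mu>) i = (G * (real m+1+\<mu>) / (real m+1)) * X"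
    and "jc (Suc m) \<mu> (1 - \<mu>) (Suc i) = (G * (real m+1+\<mu>) / (real m+1)) * X * (real i-real m-1) * (real m+3+real i) / ((\<mu>+1+real i)*(real i+1))"
    and "jc (Suc (Suc m)) \<mu> (1 - \<mu>) (Suc i) = (G*(real m+1+\<mu>)*(real m+2+\<mu>)/((real m+1)*(real m+2))) * X * (-(real m+2)) * (real m+3+real i) * (real m+4+real i) / ((real m+3)*((\<mu>+1+real i)*(real i+1)))"
    and "jc m \<mu> (1 - \<mu>) (Suc i) = G * X * (real i-real m-1)*(real i-real m)*(real m+2) / (-(real m+1)*((\<mu>+1+real i)*(real i+1)))"
    and "jc (Suc (Suc m)) \<mu> (1 - \<mu>) 0 = G*(real m+1+\<mu>)*(real m+2+\<mu>)/((real m+1)*(real m+2))"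
    and "jc m \<mu> (1 - \<mu>) 0 = G"
    and "i = 0 \<Longrightarrow> X = 1"
proof -
  define Gm where "Gm = Gamma (real m + \<mu> + 1)"
  define Gu where "Gu = Gamma (\<mu> + 1)"
  define A where "A = pochhammer (- real (Suc m)) i"
  define Bq where "Bq = pochhammer (real (Suc m) + 2) i"
  define U where "U = pochhammer (\<mu> + 1) i"
  define F where "F = (fact i :: real)"
  define fm where "fm = (fact m :: real)"
  have ni: "z > 0 \<Longrightarrow> z \<notin> \<int>\<^sub>\<le>\<^sub>0" for z :: real by (auto dest: nonpos_Ints_nonpos)
  have pos: "Gm > 0" "Gu > 0" "U > 0" "F > 0" "fm > 0"
    using mu by (auto simp: Gm_def Gu_def U_def F_def fm_def intro!: Gamma_real_pos pochhammer_pos)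
  have g1: "Gamma (real (Suc m) + \<mu> + 1) = (real m + 1 + \<mu>) * Gm"
  proof -
    have "Gamma (real m + \<mu> + 1 + 1) = (real m + \<mu> + 1) * Gamma (real m + \<mu> + 1)"
      by (rule Gamma_plus1) (rule ni, use mu in simp)
    then show ?thesis by (simp add: Gm_def algebra_simps)
  qed
  have g2: "Gamma (real (Suc (Suc m)) + \<mu> + 1) = (real m + 2 + \<mu>) * ((real m + 1 + \<mu>) * Gm)"
  proof -
    have "Gamma (real (Suc m) + \<mu> + 1 + 1) = (real (Suc m) + \<mu> + 1) * Gamma (real (Suc m) + \<mu> + 1)"
      by (rule Gamma_plus1) (rule ni, use mu in simp)
    then show ?thesis using g1 by (simp add: algebra_simps)
  qed
  have f1: "fact (Suc m) = (real m + 1) * fm" by (simp add: fm_def fact_Suc)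
  have f2: "fact (Suc (Suc m)) = (real m + 2) * ((real m + 1) * fm)" by (simp add: fm_def fact_Suc algebra_simps)
  have pA1: "pochhammer (- real (Suc m)) (Suc i) = A * (real i - real m - 1)"
    by (simp add: A_def pochhammer_Suc algebra_simps)
  have pA2: "pochhammer (- real (Suc (Suc m))) (Suc i) = -(real m + 2) * A"
  proof -
    have "- real (Suc (Suc m)) + 1 = - real (Suc m)" by simp
    then show ?thesis by (simp only: pochhammer_rec A_def) simp
  qed
  have pA0: "pochhammer (- real m) (Suc i) = A * (real i - real m - 1) * (real i - real m) / (- (real m + 1))"
  proof -
    have "pochhammer (- real (Suc m)) (Suc i) = - real (Suc m) * pochhammer (- real (Suc m) + 1) i"
      by (rule pochhammer_rec)
    moreover have "- real (Suc m) + 1 = - real m" by simp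
    ultimately have "A * (real i - real m - 1) = - (real m + 1) * pochhammer (- real m) i" using pA1 by (simp add: algebra_simps)
    then have "pochhammer (- real m) i = A * (real i - real m - 1) / (- (real m + 1))"
      by (simp add: field_simps)
    then show ?thesis by (simp add: pochhammer_Suc)
  qed
  have pB1: "pochhammer (real (Suc m) + 2) (Suc i) = Bq * (real m + 3 + real i)"
    by (simp add: Bq_def pochhammer_Suc algebra_simps)
  have pB2: "pochhammer (real (Suc (Suc m)) + 2) (Suc i) = Bq * (real m + 3 + real i) * (real m + 4 + real i) / (real m + 3)"
  proof -
    have "pochhammer (real (Suc m) + 2) (Suc i) = (real (Suc m) + 2) * pochhammer (real (Suc m) + 2 + 1) i"
      by (rule pochhammer_rec)
    moreover have "real (Suc m) + 2 + 1 = real (Suc (Suc m)) + 2" by simp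
    ultimately have "Bq * (real m + 3 + real i) = (real m + 3) * pochhammer (real (Suc (Suc m)) + 2) i"
      using pB1 by (simp add: algebra_simps)
    then have "pochhammer (real (Suc (Suc m)) + 2) i = Bq * (real m + 3 + real i) / (real m + 3)"
      by (simp add: field_simps)
    then show ?thesis by (simp add: pochhammer_Suc algebra_simps)
  qed
  have pB0: "pochhammer (real m + 2) (Suc i) = (real m + 2) * Bq"
  proof -
    have "real m + 2 + 1 = real (Suc m) + 2" by simp
    then show ?thesis by (simp only: pochhammer_rec Bq_def)
  qed
  have pU: "pochhammer (\<mu> + 1) (Suc i) = U * (\<mu> + 1 + real i)" by (simp add: U_def pochhammer_Suc)
  have pF: "fact (Suc i) = (real i + 1) * F" by (simp add: F_def fact_Suc)
  have Gd: "G = Gm / (fm * Gu)" by (simp add: G_def Gm_def fm_def Gu_def)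
  have Xd: "X = A * Bq / (U * F)" by (simp add: X_def A_def Bq_def U_def F_def)
  have nz: "real m + 1 \<noteq> 0" "real m + 2 \<noteq> 0" "real m + 3 \<noteq> 0" "\<mu> + 1 + real i \<noteq> 0" "real i + 1 \<noteq> 0"
    "real m + 1 + \<mu> \<noteq> 0" "Gm \<noteq> 0" "Gu \<noteq> 0" "U \<noteq> 0" "F \<noteq> 0" "fm \<noteq> 0"
    using mu pos by auto
  show "jc (Suc m) \<mu> (1 - \<mu>) i = (G * (real m+1+\<mu>) / (real m+1)) * X"
    unfolding jc_mu g1 f1 Gd Xd using nz
    by (simp add: A_def Bq_def U_def F_def Gu_def divide_simps; simp add: algebra_simps)
  show "jc (Suc m) \<mu> (1 - \<mu>) (Suc i) = (G * (real m+1+\<mu>) / (real m+1)) * X * (real i-real m-1) * (real m+3+real i) / ((\<mu>+1+real i)*(real i+1))"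
    unfolding jc_mu g1 f1 pA1 pB1 pU pF Gd Xd Gu_def[symmetric] using nz
    by (simp add: divide_simps; simp add: algebra_simps)
  show "jc (Suc (Suc m)) \<mu> (1 - \<mu>) (Suc i) = (G*(real m+1+\<mu>)*(real m+2+\<mu>)/((real m+1)*(real m+2))) * X * (-(real m+2)) * (real m+3+real i) * (real m+4+real i) / ((real m+3)*((\<mu>+1+real i)*(real i+1)))"
    unfolding jc_mu g2 f2 pA2 pB2 pU pF Gd Xd Gu_def[symmetric] using nz
    by (simp add: divide_simps; simp add: algebra_simps)
  show "jc m \<mu> (1 - \<mu>) (Suc i) = G * X * (real i-real m-1)*(real i-real m)*(real m+2) / (-(real m+1)*((\<mu>+1+real i)*(real i+1)))"
    unfolding jc_mu Gm_def[symmetric] fm_def[symmetric] pA0 pB0 pU pF Gd Xd Gu_def[symmetric] using nz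
    by (simp add: divide_simps; simp add: algebra_simps)
  show "jc (Suc (Suc m)) \<mu> (1 - \<mu>) 0 = G*(real m+1+\<mu>)*(real m+2+\<mu>)/((real m+1)*(real m+2))"
    unfolding jc_mu g2 f2 Gd Gu_def[symmetric] using nz
    by (simp add: divide_simps; simp add: algebra_simps)
  show "jc m \<mu> (1 - \<mu>) 0 = G"
    unfolding jc_mu G_def by simp
  show "i = 0 \<Longrightarrow> X = 1" unfolding X_def by simp
qed

lemma rec_vals:
  "rec_a (Suc (Suc m)) = (real m+3)/(2*real m+5)"
  "rec_b \<mu> (Suc m) = (1 - 2*\<mu>)/((2*(real m+1)+1)*(2*(real m+1)+3))"
  "rec_c \<mu> m = (real m+1+\<mu>)*(real m+2-\<mu>)/((real m+2)*(2*real m+3))"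
  by (simp_all add: rec_a_def rec_b_def rec_c_def algebra_simps)

lemma recY_suc:
  assumes mu: "1 < \<mu>" "\<mu> < 2"
  shows "[:2, -2:] * Yp (Suc m) \<mu> (1 - \<mu>) = smult (rec_a (Suc (Suc m))) (Yp (Suc (Suc m)) \<mu> (1 - \<mu>))
     + smult (rec_b \<mu> (Suc m) + 1) (Yp (Suc m) \<mu> (1 - \<mu>)) + smult (rec_c \<mu> m) (Yp m \<mu> (1 - \<mu>))"
proof (rule poly_eqI)
  fix k
  show "coeff ([:2, -2:] * Yp (Suc m) \<mu> (1 - \<mu>)) k = coeff (smult (rec_a (Suc (Suc m))) (Yp (Suc (Suc m)) \<mu> (1 - \<mu>))
     + smult (rec_b \<mu> (Suc m) + 1) (Yp (Suc m) \<mu> (1 - \<mu>)) + smult (rec_c \<mu> m) (Yp m \<mu> (1 - \<mu>))) k"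
  proof (cases k)
    case 0
    note C = coeffs_rec(1,7)[OF mu, where m=m and i=0] coeffs_rec(5,6)[OF mu, where m=m]
    show ?thesis unfolding 0 coeff_lin coeff_add coeff_smult coeff_Yp
      using rec_core0[of "real m" \<mu> "Gamma (real m + \<mu> + 1) / (fact m * Gamma (\<mu> + 1))"] mu C
      by (simp only: rec_vals if_True) simp
  next
    case (Suc i)
    note C = coeffs_rec(1-4)[OF mu, where m=m and i=i]
    have "2 * jc (Suc m) \<mu> (1 - \<mu>) (Suc i) - 2 * jc (Suc m) \<mu> (1 - \<mu>) i
      = rec_a (Suc (Suc m)) * jc (Suc (Suc m)) \<mu> (1 - \<mu>) (Suc i) + (rec_b \<mu> (Suc m) + 1) * jc (Suc m) \<mu> (1 - \<mu>) (Suc i)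
        + rec_c \<mu> m * jc m \<mu> (1 - \<mu>) (Suc i)"
      unfolding C(1-4) rec_vals by (rule rec_core) (use mu in auto)
    then show ?thesis unfolding Suc coeff_lin coeff_add coeff_smult coeff_Yp by simp
  qed
qed

lemma recY_0:
  assumes mu: "1 < \<mu>" "\<mu> < 2"
  shows "[:2, -2:] * Yp 0 \<mu> (1 - \<mu>) = smult (rec_a 1) (Yp 1 \<mu> (1 - \<mu>)) + smult (rec_b \<mu> 0 + 1) (Yp 0 \<mu> (1 - \<mu>))"
proof (rule poly_eqI)
  fix k
  have g: "Gamma (\<mu> + 1) > 0" using mu by (intro Gamma_real_pos) auto
  have G1: "Gamma (real 0 + \<mu> + 1) / (fact 0 * Gamma (\<mu> + 1)) = 1" using g by simp
  have c00: "jc 0 \<mu> (1 - \<mu>) 0 = 1" using coeffs_rec(6)[OF mu, where m=0] G1 by simp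
  have c10: "jc 1 \<mu> (1 - \<mu>) 0 = 1 + \<mu>" using coeffs_rec(1,7)[OF mu, where m=0 and i=0] G1 by simp
  have c11: "jc 1 \<mu> (1 - \<mu>) 1 = -3"
  proof -
    have ni: "\<mu> + 1 \<notin> \<int>\<^sub>\<le>\<^sub>0" using mu by (auto dest: nonpos_Ints_nonpos)
    have gg: "Gamma (real 1 + \<mu> + 1) = (\<mu> + 1) * Gamma (\<mu> + 1)"
      using Gamma_plus1[OF ni] by (simp add: add_ac)
    have "\<mu> + 1 \<noteq> 0" using mu by simp
    then show ?thesis unfolding jc_mu gg using g by (simp add: divide_simps; simp add: algebra_simps)
  qed
  have c10': "jc (Suc 0) \<mu> (1 - \<mu>) 0 = 1 + \<mu>" using c10 by simp
  have c11': "jc (Suc 0) \<mu> (1 - \<mu>) (Suc 0) = -3" using c11 by simp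
  show "coeff ([:2, -2:] * Yp 0 \<mu> (1 - \<mu>)) k = coeff (smult (rec_a 1) (Yp 1 \<mu> (1 - \<mu>)) + smult (rec_b \<mu> 0 + 1) (Yp 0 \<mu> (1 - \<mu>))) k"
  proof (cases k)
    case 0 then show ?thesis by (simp add: coeff_lin coeff_Yp c00 c10 c10' rec_a_def rec_b_def field_simps)
  next
    case (Suc i)
    show ?thesis
    proof (cases i)
      case 0 then show ?thesis using Suc by (simp add: coeff_lin coeff_Yp c00 c11 c11' jc_zero rec_a_def)
    next
      case (Suc i') then show ?thesis using \<open>k = Suc i\<close> by (simp add: coeff_lin coeff_Yp jc_zero)
    qed
  qed
qed

lemma jacobiP_Y: "jacobiP l \<alpha> \<beta> x = poly (Yp l \<alpha> \<beta>) ((1 - x) / 2)"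
  by (simp add: poly_jp[symmetric] jp_def poly_pcompose poly_Tp)

lemma rec_x_suc:
  assumes mu: "1 < \<mu>" "\<mu> < 2"
  shows "(1 + x) * jacobiP (Suc m) \<mu> (1 - \<mu>) x = rec_a (Suc (Suc m)) * jacobiP (Suc (Suc m)) \<mu> (1 - \<mu>) x
     + (rec_b \<mu> (Suc m) + 1) * jacobiP (Suc m) \<mu> (1 - \<mu>) x + rec_c \<mu> m * jacobiP m \<mu> (1 - \<mu>) x"
proof -
  have "poly ([:2, -2:] * Yp (Suc m) \<mu> (1 - \<mu>)) ((1 - x) / 2) = poly (smult (rec_a (Suc (Suc m))) (Yp (Suc (Suc m)) \<mu> (1 - \<mu>))
     + smult (rec_b \<mu> (Suc m) + 1) (Yp (Suc m) \<mu> (1 - \<mu>)) + smult (rec_c \<mu> m) (Yp m \<mu> (1 - \<mu>))) ((1 - x) / 2)"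
    by (simp only: recY_suc[OF mu])
  moreover have "poly ([:2, -2:] * Yp (Suc m) \<mu> (1 - \<mu>)) ((1 - x) / 2) = (1 + x) * poly (Yp (Suc m) \<mu> (1 - \<mu>)) ((1 - x) / 2)"
    by (simp add: field_simps)
  ultimately show ?thesis by (simp add: jacobiP_Y)
qed

lemma rec_x_0:
  assumes mu: "1 < \<mu>" "\<mu> < 2"
  shows "(1 + x) * jacobiP 0 \<mu> (1 - \<mu>) x = rec_a 1 * jacobiP 1 \<mu> (1 - \<mu>) x + (rec_b \<mu> 0 + 1) * jacobiP 0 \<mu> (1 - \<mu>) x"
proof -
  have "poly ([:2, -2:] * Yp 0 \<mu> (1 - \<mu>)) ((1 - x) / 2) = poly (smult (rec_a 1) (Yp 1 \<mu> (1 - \<mu>)) + smult (rec_b \<mu> 0 + 1) (Yp 0 \<mu> (1 - \<mu>))) ((1 - x) / 2)"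
    by (simp only: recY_0[OF mu])
  moreover have "poly ([:2, -2:] * Yp 0 \<mu> (1 - \<mu>)) ((1 - x) / 2) = (1 + x) * poly (Yp 0 \<mu> (1 - \<mu>)) ((1 - x) / 2)"
    by (simp add: field_simps)
  ultimately show ?thesis by (simp add: jacobiP_Y)
qed

theorem lemma5p2:
  fixes N :: nat and \<alpha> \<beta> \<mu> :: real
    and xs w :: "nat \<Rightarrow> real"
    and h :: "nat \<Rightarrow> real poly"
    and rh :: "nat \<Rightarrow> nat \<Rightarrow> real"
  assumes N: "N \<ge> 3"
    and ab: "\<alpha> > -1" "\<beta> > -1"
    and mu: "1 < \<mu>" "\<mu> < 2"
    and nodes: "JGL_nodes N \<alpha> \<beta> xs"
    and weights: "JGL_weights N \<alpha> \<beta> xs w"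
    and h_deg: "\<And>j. j \<le> N - 1 \<Longrightarrow> degree (h j) \<le> N - 1"
    and h_lag: "\<And>i j. i \<le> N - 1 \<Longrightarrow> j \<le> N - 1 \<Longrightarrow> poly (h j) (xs i) = (if i = j then 1 else 0)"
    and rh0: "\<And>j. j \<le> N - 1 \<Longrightarrow> rh 0 j = (if j = 0 then 1 else 0)"
    and rhN1: "\<And>j. j \<le> N - 1 \<Longrightarrow>
       rh (N - 1) j = rho_tilde \<alpha> \<beta> \<mu> N xs w (N - 1) j / rec_a (N - 1)"
    and rhN2: "\<And>j. j \<le> N - 1 \<Longrightarrow>
       rh (N - 2) j = rho_tilde \<alpha> \<beta> \<mu> N xs w (N - 2) j / rec_a (N - 2)
                      - (rec_b \<mu> (N - 2) + 1) / rec_a (N - 2) * rh (N - 1) j"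
    and rhi: "\<And>i j. 1 \<le> i \<Longrightarrow> i \<le> N - 3 \<Longrightarrow> j \<le> N - 1 \<Longrightarrow>
       rh i j = rho_tilde \<alpha> \<beta> \<mu> N xs w i j / rec_a i
                - (rec_b \<mu> i + 1) / rec_a i * rh (i + 1) j
                - rec_c \<mu> i / rec_a i * rh (i + 2) j"
  shows "\<forall>j \<le> N - 1. \<forall>x::real.
           poly (h j) x = (\<Sum>n\<le>N - 1. rho \<alpha> \<beta> N xs w n j * jacobiP n \<alpha> \<beta> x) \<and>
           poly (h j) x = (\<Sum>l\<le>N - 1. rho_tilde \<alpha> \<beta> \<mu> N xs w l j * jacobiP l \<mu> (1 - \<mu>) x) \<and>
           poly (h j) x = rh 0 j + (\<Sum>l\<le>N - 2. rh (l + 1) j * (1 + x) * jacobiP l \<mu> (1 - \<mu>) x)"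
proof (intro allI impI)
  fix j x
  assume j: "j \<le> N - 1"
  have mu1: "\<mu> > -1" "1 - \<mu> > -1" using mu by auto
  have hd: "degree (h j) \<le> N - 1" using h_deg[OF j] .
  have hl: "\<And>i. i \<le> N - 1 \<Longrightarrow> poly (h j) (xs i) = (if i = j then 1 else 0)" using h_lag j by blast
  have E1: "poly (h j) y = (\<Sum>n\<le>N - 1. rho \<alpha> \<beta> N xs w n j * jacobiP n \<alpha> \<beta> y)" for y
    by (rule expand_rho[OF N ab nodes weights j hd hl])
  define RT where "RT l = rho_tilde \<alpha> \<beta> \<mu> N xs w l j" for l
  define Q where "Q l y = jacobiP l \<mu> (1 - \<mu>) y" for l y
  have E2: "(\<Sum>n\<le>N - 1. rho \<alpha> \<beta> N xs w n j * jacobiP n \<alpha> \<beta> y) = (\<Sum>l\<le>N - 1. RT l * Q l y)" for y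
  proof -
    have "(\<Sum>n\<le>N - 1. rho \<alpha> \<beta> N xs w n j * jacobiP n \<alpha> \<beta> y)
        = (\<Sum>n\<le>N - 1. \<Sum>k\<le>n. rho \<alpha> \<beta> N xs w n j * (conn_coeff \<alpha> \<beta> \<mu> (1 - \<mu>) k n * Q k y))"
      by (rule sum.cong[OF refl]) (simp add: conn_coeff_expand[OF ab mu1] Q_def sum_distrib_left)
    also have "\<dots> = (\<Sum>k\<le>N - 1. \<Sum>n=k..N - 1. rho \<alpha> \<beta> N xs w n j * (conn_coeff \<alpha> \<beta> \<mu> (1 - \<mu>) k n * Q k y))"
      by (rule sum_swap_tri)
    also have "\<dots> = (\<Sum>l\<le>N - 1. RT l * Q l y)"
      by (rule sum.cong[OF refl]) (simp add: RT_def rho_tilde_def sum_distrib_right mult_ac; simp add: sum_distrib_left)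
    finally show ?thesis .
  qed
  define rr where "rr k = (if 1 \<le> k \<and> k \<le> N - 1 then rh k j else 0)" for k
  define d where "d i = rr i * rec_a i + rr (i + 1) * (rec_b \<mu> i + 1) + rr (i + 2) * rec_c \<mu> i" for i
  have apos: "rec_a i \<noteq> 0" for i by (simp add: rec_a_def)
  have rg: "(1 + y) * Q l y = rec_a (l + 1) * Q (l + 1) y + (rec_b \<mu> l + 1) * Q l y
      + (if l = 0 then 0 else rec_c \<mu> (l - 1) * Q (l - 1) y)" for l y
  proof (cases l)
    case 0 then show ?thesis using rec_x_0[OF mu, of y] by (simp add: Q_def)
  next
    case (Suc m) then show ?thesis using rec_x_suc[OF mu, of y m] by (simp add: Q_def)
  qed
  have NM: "N - 1 = Suc (N - 2)" "N - 2 = Suc (N - 3)" using N by auto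
  have dRT: "d i = RT i" if i: "1 \<le> i" "i \<le> N - 1" for i
  proof -
    consider "i = N - 1" | "i = N - 2" | "i \<le> N - 3" using i N by linarith
    then show ?thesis
    proof cases
      case 1
      have "rh (N - 1) j * rec_a (N - 1) = RT (N - 1)"
        using rhN1[OF j] apos[of "N - 1"] by (simp add: RT_def field_simps)
      moreover have e: "rr (N - 1) = rh (N - 1) j" "rr (N - 1 + 1) = 0" "rr (N - 1 + 2) = 0"
        using N by (auto simp: rr_def)
      ultimately show ?thesis unfolding d_def 1 e by simp
    next
      case 2
      have "rh (N - 2) j * rec_a (N - 2) + rh (N - 1) j * (rec_b \<mu> (N - 2) + 1) = RT (N - 2)"
        using rhN2[OF j] apos[of "N - 2"] by (simp add: RT_def field_simps)
      moreover have "N - 2 + 1 = N - 1" using N by auto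
      moreover have e: "rr (N - 2) = rh (N - 2) j" "rr (N - 2 + 2) = 0" "rr (N - 1) = rh (N - 1) j"
        using N by (auto simp: rr_def)
      ultimately show ?thesis unfolding d_def 2 by (simp only: e)
    next
      case 3
      have "rh i j * rec_a i = RT i - (rec_b \<mu> i + 1) * rh (i + 1) j - rec_c \<mu> i * rh (i + 2) j"
        unfolding rhi[OF i(1) 3 j] RT_def using apos[of i] by (simp add: divide_simps; simp add: algebra_simps)
      then have "rh i j * rec_a i + rh (i + 1) j * (rec_b \<mu> i + 1) + rh (i + 2) j * rec_c \<mu> i = RT i"
        by (simp add: algebra_simps)
      moreover have e: "rr i = rh i j" "rr (i + 1) = rh (i + 1) j" "rr (i + 2) = rh (i + 2) j"
        using i 3 N by (auto simp: rr_def)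
      ultimately show ?thesis unfolding d_def e by simp
    qed
  qed
  have Q0: "Q 0 y = 1" for y using jp0[OF mu1(1)] by (simp add: Q_def poly_jp[symmetric])
  define K where "K = rh 0 j + d 0 - RT 0"
  have key: "rh 0 j + (\<Sum>l\<le>N - 2. rh (l + 1) j * (1 + y) * Q l y) = (\<Sum>l\<le>N - 1. RT l * Q l y) + K" for y
  proof -
    have A: "(\<Sum>l\<le>N - 2. rh (l + 1) j * (1 + y) * Q l y) = (\<Sum>l\<le>N - 2. rr (l + 1) * ((1 + y) * Q l y))"
      by (rule sum.cong[OF refl]) (use N in \<open>auto simp: rr_def\<close>)
    also have "\<dots> = (\<Sum>l\<le>N - 2. rr (l + 1) * rec_a (l + 1) * Q (l + 1) y)
        + (\<Sum>l\<le>N - 2. rr (l + 1) * (rec_b \<mu> l + 1) * Q l y)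
        + (\<Sum>l\<le>N - 2. rr (l + 1) * (if l = 0 then 0 else rec_c \<mu> (l - 1) * Q (l - 1) y))"
      unfolding rg by (simp add: sum.distrib algebra_simps)
    also have "(\<Sum>l\<le>N - 2. rr (l + 1) * rec_a (l + 1) * Q (l + 1) y) = (\<Sum>i\<le>N - 1. rr i * rec_a i * Q i y)"
      unfolding NM(1) sum.atMost_Suc_shift by (simp add: rr_def)
    also have "(\<Sum>l\<le>N - 2. rr (l + 1) * (rec_b \<mu> l + 1) * Q l y) = (\<Sum>i\<le>N - 1. rr (i + 1) * (rec_b \<mu> i + 1) * Q i y)"
      unfolding NM(1) sum.atMost_Suc by (simp add: rr_def)
    also have "(\<Sum>l\<le>N - 2. rr (l + 1) * (if l = 0 then 0 else rec_c \<mu> (l - 1) * Q (l - 1) y))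
        = (\<Sum>i\<le>N - 1. rr (i + 2) * rec_c \<mu> i * Q i y)"
    proof -
      have "(\<Sum>l\<le>N - 2. rr (l + 1) * (if l = 0 then 0 else rec_c \<mu> (l - 1) * Q (l - 1) y))
          = (\<Sum>i\<le>N - 3. rr (i + 2) * rec_c \<mu> i * Q i y)"
        unfolding NM(2) sum.atMost_Suc_shift by (simp add: mult_ac)
      also have "\<dots> = (\<Sum>i\<le>N - 1. rr (i + 2) * rec_c \<mu> i * Q i y)"
        unfolding NM(1) NM(2) sum.atMost_Suc using N by (simp add: rr_def)
      finally show ?thesis .
    qed
    finally have B: "(\<Sum>l\<le>N - 2. rh (l + 1) j * (1 + y) * Q l y) = (\<Sum>i\<le>N - 1. d i * Q i y)"
      by (simp add: d_def sum.distrib algebra_simps)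
    have C: "(\<Sum>i\<le>N - 1. d i * Q i y) = (\<Sum>i\<le>N - 1. RT i * Q i y) + (d 0 - RT 0)"
    proof -
      have "(\<Sum>i\<le>N - 1. d i * Q i y) - (\<Sum>i\<le>N - 1. RT i * Q i y) = (\<Sum>i\<le>N - 1. (d i - RT i) * Q i y)"
        by (simp add: sum_subtractf algebra_simps)
      also have "\<dots> = (d 0 - RT 0) * Q 0 y + (\<Sum>i\<le>N - 2. (d (Suc i) - RT (Suc i)) * Q (Suc i) y)"
        unfolding NM(1) sum.atMost_Suc_shift ..
      also have "(\<Sum>i\<le>N - 2. (d (Suc i) - RT (Suc i)) * Q (Suc i) y) = 0"
        by (rule sum.neutral) (use N dRT in auto)
      finally show ?thesis using Q0 by simp
    qed
    show ?thesis unfolding B C K_def by simp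
  qed
  have K0: "K = 0"
  proof -
    have x0: "xs 0 = -1" using nodes_props[OF N ab nodes weights] by simp
    have "poly (h j) (-1) = rh 0 j" using hl[of 0] rh0[OF j] x0 by simp
    then have "(\<Sum>l\<le>N - 1. RT l * Q l (-1)) = rh 0 j" using E1[of "-1"] E2[of "-1"] by simp
    then show ?thesis using key[of "-1"] by simp
  qed
  show "poly (h j) x = (\<Sum>n\<le>N - 1. rho \<alpha> \<beta> N xs w n j * jacobiP n \<alpha> \<beta> x) \<and>
           poly (h j) x = (\<Sum>l\<le>N - 1. rho_tilde \<alpha> \<beta> \<mu> N xs w l j * jacobiP l \<mu> (1 - \<mu>) x) \<and>
           poly (h j) x = rh 0 j + (\<Sum>l\<le>N - 2. rh (l + 1) j * (1 + x) * jacobiP l \<mu> (1 - \<mu>) x)"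
    using E1[of x] E2[of x] key[of x] K0 by (simp add: RT_def Q_def)
qed

end
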